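(* Let $0<a\le1$ and $z_1,z_2\in\mathbb{C}$ with $0<|z_1|,|z_2|\le 1$. For $\vec\sigma=(\sigma_1,\sigma_2)$ with $\sigma_1>0$, $\sigma_2>1$, $\sigma_1+\sigma_2>2$ and $\vec t=(t_1,t_2)\in\mathbb{R}^2$ put $$f_{\vec\sigma,a,\vec z}(\vec t):=\Gamma(\sigma_1+{\rm i}t_1)\Gamma(\sigma_2+{\rm i}t_2)\,\Phi_2(\sigma_1+{\rm i}t_1,\sigma_2+{\rm i}t_2,a,z_1,z_2),\qquad F_{\vec\sigma,a,\vec z}(\vec t):=\frac{f_{\vec\sigma,a,\vec z}(\vec t)}{f_{\vec\sigma,a,\vec z}(\vec 0)}.$$ Then $F_{\vec\sigma,a,\vec z}$ is the characteristic function of a probability measure on $\mathbb{R}^2$ for all $\sigma_1>0$, $\sigma_2>1$, $\sigma_1+\sigma_2>2$ if and only if $z_1,z_2\in[-1,1]$ (both nonzero). Moreover, in that case the associated probability measure is absolutely continuous with density $$P_{\vec\sigma,a,\vec z}(\eta,\theta)=\frac{e^{\sigma_1\eta}e^{\sigma_2\theta}\exp\bigl((1-a)(e^\eta+e^\theta)\bigr)}{f_{\vec\sigma,a,\vec z}(\vec0)\,(\exp(e^\theta)-z_2)\,(\exp(e^\eta+e^\theta)-z_1)},\qquad \eta,\theta\in\mathbb{R}.$$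
   Context: For $0<a\le1$, $s_1,s_2\in\mathbb{C}$ and $z_1,z_2\in\mathbb{C}$ with $0<|z_1|,|z_2|\le1$, the Hurwitz–Lerch type Euler–Zagier double zeta function is $$\Phi_2(s_1,s_2,a,z_1,z_2):=\sum_{m=0}^\infty\frac{z_1^m}{(m+a)^{s_1}}\sum_{n=1}^\infty\frac{z_2^{n-1}}{(m+n+a)^{s_2}},$$ which converges absolutely for $\Re s_1>0$, $\Re s_2>1$, $\Re(s_1+s_2)>2$ and continues meromorphically to $\mathbb{C}^2$. The characteristic function of a probability measure $\mu$ on $\mathbb{R}^2$ is $\int_{\mathbb{R}^2}e^{{\rm i}(t_1\eta+t_2\theta)}\mu(d\eta\,d\theta)$. *)

theory Defs
  imports "HOL-Probability.Probability"
begin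

text \<open>Hurwitz--Lerch type Euler--Zagier double zeta function, defined by its
  (iterated) series; the statement only uses it in the region of absolute convergence.\<close>
definition Phi2 :: "complex \<Rightarrow> complex \<Rightarrow> real \<Rightarrow> complex \<Rightarrow> complex \<Rightarrow> complex" where
  "Phi2 s1 s2 a z1 z2 =
     (\<Sum>m. z1 ^ m / (complex_of_real (real m + a)) powr s1 *
        (\<Sum>n. z2 ^ n / (complex_of_real (real m + real (Suc n) + a)) powr s2))"

definition f_fun :: "real \<Rightarrow> real \<Rightarrow> real \<Rightarrow> complex \<Rightarrow> complex \<Rightarrow> real \<Rightarrow> real \<Rightarrow> complex" where
  "f_fun \<sigma>1 \<sigma>2 a z1 z2 t1 t2 =
     Gamma (Complex \<sigma>1 t1) * Gamma (Complex \<sigma>2 t2) * Phi2 (Complex \<sigma>1 t1) (Complex \<sigma>2 t2) a z1 z2"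

definition F_fun :: "real \<Rightarrow> real \<Rightarrow> real \<Rightarrow> complex \<Rightarrow> complex \<Rightarrow> real \<Rightarrow> real \<Rightarrow> complex" where
  "F_fun \<sigma>1 \<sigma>2 a z1 z2 t1 t2 = f_fun \<sigma>1 \<sigma>2 a z1 z2 t1 t2 / f_fun \<sigma>1 \<sigma>2 a z1 z2 0 0"

definition char2 :: "(real \<times> real) measure \<Rightarrow> real \<Rightarrow> real \<Rightarrow> complex" where
  "char2 M t1 t2 = (LINT x|M. cis (t1 * fst x + t2 * snd x))"

definition is_char_fun2 :: "(real \<Rightarrow> real \<Rightarrow> complex) \<Rightarrow> bool" where
  "is_char_fun2 F \<longleftrightarrow> (\<exists>M. prob_space M \<and> sets M = sets (borel :: (real \<times> real) measure) \<and>
      (\<forall>t1 t2. F t1 t2 = char2 M t1 t2))"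

definition P_dens :: "real \<Rightarrow> real \<Rightarrow> real \<Rightarrow> complex \<Rightarrow> complex \<Rightarrow> real \<times> real \<Rightarrow> complex" where
  "P_dens \<sigma>1 \<sigma>2 a z1 z2 x = (let \<eta> = fst x; \<theta> = snd x in
     complex_of_real (exp (\<sigma>1 * \<eta>) * exp (\<sigma>2 * \<theta>) * exp ((1 - a) * (exp \<eta> + exp \<theta>))) /
     (f_fun \<sigma>1 \<sigma>2 a z1 z2 0 0 * (complex_of_real (exp (exp \<theta>)) - z2) *
        (complex_of_real (exp (exp \<eta> + exp \<theta>)) - z1)))"

end

theory Submission
  imports Defs
begin

lemma cpowr_real: "x > 0 \<Longrightarrow> complex_of_real x powr s = exp (s * of_real (ln x))"
  by (simp add: powr_def Ln_of_real)

lemma G1: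
  fixes s :: complex and c :: real
  assumes s: "0 < Re s" and c: "0 < c"
  shows "integrable lborel (\<lambda>\<eta>. exp (s * of_real \<eta>) * of_real (exp (- c * exp \<eta>)))" (is ?I)
    and "(\<integral>\<eta>. exp (s * of_real \<eta>) * of_real (exp (- c * exp \<eta>)) \<partial>lborel) = Gamma s / of_real c powr s" (is ?E)
proof -
  define f where "f = (\<lambda>t::real. complex_of_real t powr (s - 1) / of_real (exp t))"
  define g where "g = (\<lambda>\<eta>::real. c * exp \<eta>)"
  define e1 where "e1 = (\<lambda>\<eta>::real. exp (s * of_real \<eta>) * of_real (exp (- c * exp \<eta>)))"
  define C where "C = complex_of_real c powr s"
  have C0: "C \<noteq> 0" using c by (simp add: C_def)
  have A: "f absolutely_integrable_on {0<..} \<and> integral {0<..} f = Gamma s"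
    using absolutely_integrable_Gamma_integral'[OF s] Gamma_integral_complex'[OF s]
    by (auto simp: f_def integral_unique)
  have img: "g ` UNIV = {0<..}"
  proof
    show "g ` UNIV \<subseteq> {0<..}" using c by (auto simp: g_def)
    show "{0<..} \<subseteq> g ` UNIV"
    proof
      fix t :: real assume "t \<in> {0<..}"
      then have "t = g (ln (t / c))" using c by (simp add: g_def)
      then show "t \<in> g ` UNIV" by blast
    qed
  qed
  have der: "\<And>x. x \<in> UNIV \<Longrightarrow> (g has_field_derivative g x) (at x within UNIV)"
    unfolding g_def by (auto intro!: derivative_eq_intros)
  have inj: "inj_on g UNIV" using c by (auto simp: g_def inj_on_def)
  have B: "(\<lambda>x. \<bar>g x\<bar> *\<^sub>R f (g x)) absolutely_integrable_on UNIV \<and> integral UNIV (\<lambda>x. \<bar>g x\<bar> *\<^sub>R f (g x)) = Gamma s"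
    using has_absolute_integral_change_of_variables_real[OF _ der inj, of f "Gamma s"] A img by simp
  have pt: "\<bar>g x\<bar> *\<^sub>R f (g x) = C * e1 x" for x
  proof -
    have gx: "g x > 0" using c by (simp add: g_def)
    have "ln (g x) = ln c + x" using c by (simp add: g_def ln_mult)
    then have gxe: "complex_of_real (g x) = exp (of_real (ln c + x))"
      using gx by (metis exp_ln exp_of_real)
    then have "\<bar>g x\<bar> *\<^sub>R f (g x) = exp (of_real (ln c + x)) * exp ((s - 1) * of_real (ln c + x)) / of_real (exp (g x))"
    proof -
      have p1: "complex_of_real (g x) powr (s-1) = exp ((s-1) * of_real (ln c + x))"
        using cpowr_real[OF gx] \<open>ln (g x) = ln c + x\<close> by simp
      have "\<bar>g x\<bar> *\<^sub>R f (g x) = complex_of_real (g x) * (complex_of_real (g x) powr (s-1) / of_real (exp (g x)))"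
        using gx by (simp add: f_def scaleR_conv_of_real)
      then show ?thesis unfolding p1 by (simp add: gxe)
    qed
    also have "\<dots> = exp (s * of_real (ln c)) * exp (s * of_real x) / of_real (exp (g x))"
      by (simp add: exp_add[symmetric] algebra_simps)
    also have "\<dots> = C * e1 x"
      using c by (simp add: C_def cpowr_real e1_def g_def exp_minus field_simps exp_of_real)
    finally show ?thesis .
  qed
  have meas: "e1 \<in> borel_measurable lborel" unfolding e1_def by measurable
  have "(\<lambda>x. C * e1 x) absolutely_integrable_on UNIV" using B pt by simp
  then have "integrable lebesgue (\<lambda>x. C * e1 x)" by (simp add: set_integrable_def)
  then have "integrable lebesgue (\<lambda>x. inverse C * (C * e1 x))" by (rule integrable_mult_right)
  then have "integrable lebesgue e1" using C0 by (simp add: mult.assoc[symmetric])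
  then have I: "integrable lborel e1" using meas integrable_completion by blast
  then show ?I by (simp add: e1_def)
  have "integral UNIV (\<lambda>x. C * e1 x) = Gamma s" using B pt by simp
  then have "C * integral UNIV e1 = Gamma s"
    using integral_mult_right by metis
  then have "integral UNIV e1 = Gamma s / C" using C0 by (simp add: field_simps)
  then show ?E using integral_lborel[OF I] by (simp add: e1_def C_def)
qed

lemma sum_powr_shift:
  assumes a: "a > 0" and g: "\<gamma> > 1"
  shows "summable (\<lambda>m::nat. (real m + a) powr (-\<gamma>))"
proof -
  define b where "b = min a 1"
  have b: "b > 0" "b \<le> a" "b \<le> 1" using a by (auto simp: b_def)
  have s1: "summable (\<lambda>n::nat. real (Suc n) powr (-\<gamma>))"
    using summable_real_powr_iff[of "-\<gamma>"] g by (subst summable_Suc_iff) simp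
  have s2: "summable (\<lambda>n::nat. b powr (-\<gamma>) * real (Suc n) powr (-\<gamma>))"
    by (rule summable_mult[OF s1])
  show ?thesis
  proof (rule summable_comparison_test'[OF s2])
    fix n :: nat
    have le: "b * real (Suc n) \<le> real n + a"
    proof -
      have "b * real n \<le> real n" using b by (simp add: mult_left_le_one_le)
      then show ?thesis using b by (simp add: algebra_simps)
    qed
    have "(real n + a) powr (-\<gamma>) \<le> (b * real (Suc n)) powr (-\<gamma>)"
      by (rule powr_mono2') (use g b le in auto)
    also have "\<dots> = b powr (-\<gamma>) * real (Suc n) powr (-\<gamma>)"
      using b by (simp add: powr_mult)
    finally show "norm ((real n + a) powr (-\<gamma>)) \<le> b powr (-\<gamma>) * real (Suc n) powr (-\<gamma>)"
      using a by simp
  qed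
qed

lemma D1:
  assumes a: "a > 0" and s2: "\<sigma>2 > 1"
  shows "summable (\<lambda>n::nat. (real m + real (Suc n) + a) powr (-\<sigma>2))"
  using sum_powr_shift[of "real m + 1 + a" \<sigma>2] a s2 by (simp add: add_ac)

lemma D2:
  assumes a: "a > 0" and s1: "\<sigma>1 > 0" and s2: "\<sigma>2 > 1" and s12: "\<sigma>1 + \<sigma>2 > 2"
  shows "summable (\<lambda>m::nat. (real m + a) powr (-\<sigma>1) * (\<Sum>n. (real m + real (Suc n) + a) powr (-\<sigma>2)))"
proof -
  define \<beta> where "\<beta> = (1 + min \<sigma>2 (\<sigma>1 + \<sigma>2 - 1)) / 2"
  define \<alpha> where "\<alpha> = \<sigma>2 - \<beta>"
  have \<beta>: "\<beta> > 1" "\<beta> \<le> \<sigma>2" "\<beta> < \<sigma>1 + \<sigma>2 - 1" using s1 s2 s12 by (auto simp: \<beta>_def)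
  have \<alpha>: "\<alpha> \<ge> 0" "\<sigma>1 + \<alpha> > 1" using \<beta> by (auto simp: \<alpha>_def)
  define Z where "Z = (\<Sum>n::nat. real (Suc n) powr (-\<beta>))"
  have sZ: "summable (\<lambda>n::nat. real (Suc n) powr (-\<beta>))"
    using summable_real_powr_iff[of "-\<beta>"] \<beta> by (subst summable_Suc_iff) simp
  have pt: "(real m + real (Suc n) + a) powr (-\<sigma>2) \<le> (real m + a) powr (-\<alpha>) * real (Suc n) powr (-\<beta>)" for m n
  proof -
    have "(real m + real (Suc n) + a) powr (-\<sigma>2) = (real m + real (Suc n) + a) powr (-\<alpha>) * (real m + real (Suc n) + a) powr (-\<beta>)"
      using a by (simp add: \<alpha>_def powr_add[symmetric])
    also have "\<dots> \<le> (real m + a) powr (-\<alpha>) * real (Suc n) powr (-\<beta>)"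
      apply (rule mult_mono)
      apply (rule powr_mono2') using a \<alpha> apply auto[3]
      apply (rule powr_mono2') using a \<beta> apply auto[3]
      by auto
    finally show ?thesis .
  qed
  have T: "(\<Sum>n. (real m + real (Suc n) + a) powr (-\<sigma>2)) \<le> (real m + a) powr (-\<alpha>) * Z" for m
  proof -
    have "(\<Sum>n. (real m + real (Suc n) + a) powr (-\<sigma>2)) \<le> (\<Sum>n. (real m + a) powr (-\<alpha>) * real (Suc n) powr (-\<beta>))"
      by (rule suminf_le[OF pt D1[OF a s2] summable_mult[OF sZ]])
    also have "\<dots> = (real m + a) powr (-\<alpha>) * Z" unfolding Z_def by (rule suminf_mult[OF sZ])
    finally show ?thesis .
  qed
  have sb: "summable (\<lambda>m::nat. Z * (real m + a) powr (-(\<sigma>1 + \<alpha>)))"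
    by (rule summable_mult[OF sum_powr_shift]) (use a \<alpha> in auto)
  show ?thesis
  proof (rule summable_comparison_test'[OF sb])
    fix m :: nat
    have nn: "0 \<le> (\<Sum>n. (real m + real (Suc n) + a) powr (-\<sigma>2))"
      by (rule suminf_nonneg[OF D1[OF a s2]]) simp
    have "(real m + a) powr (-\<sigma>1) * (\<Sum>n. (real m + real (Suc n) + a) powr (-\<sigma>2)) \<le> (real m + a) powr (-\<sigma>1) * ((real m + a) powr (-\<alpha>) * Z)"
      by (rule mult_left_mono[OF T]) simp
    also have "\<dots> = Z * (real m + a) powr (-(\<sigma>1 + \<alpha>))"
      using a by (simp add: powr_add[symmetric] algebra_simps)
    finally show "norm ((real m + a) powr (-\<sigma>1) * (\<Sum>n. (real m + real (Suc n) + a) powr (-\<sigma>2))) \<le> Z * (real m + a) powr (-(\<sigma>1 + \<alpha>))"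
      using nn by simp
  qed
qed

definition E1 :: "complex \<Rightarrow> real \<Rightarrow> real \<Rightarrow> complex" where
  "E1 s c \<eta> = exp (s * of_real \<eta>) * of_real (exp (- c * exp \<eta>))"

lemma E1_meas[measurable]: "E1 s c \<in> borel_measurable borel"
  unfolding E1_def by measurable

lemma E1_int: "0 < Re s \<Longrightarrow> 0 < c \<Longrightarrow> integrable lborel (E1 s c)"
  using G1(1) by (simp add: E1_def[abs_def])

lemma E1_integral: "0 < Re s \<Longrightarrow> 0 < c \<Longrightarrow> integral\<^sup>L lborel (E1 s c) = Gamma s / of_real c powr s"
  using G1(2) by (simp add: E1_def[abs_def])

lemma E1_norm: "norm (E1 s c \<eta>) = exp (Re s * \<eta>) * exp (- c * exp \<eta>)"
  by (simp add: E1_def norm_mult)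

lemma E1_norm_integral:
  assumes "0 < Re s" "0 < c"
  shows "(\<integral>\<eta>. norm (E1 s c \<eta>) \<partial>lborel) = Gamma (Re s) / c powr (Re s)"
proof -
  have eq: "E1 (of_real (Re s)) c \<eta> = of_real (norm (E1 s c \<eta>))" for \<eta>
    unfolding E1_norm unfolding E1_def of_real_mult by (simp add: exp_of_real[symmetric] mult.commute)
  have "of_real (\<integral>\<eta>. norm (E1 s c \<eta>) \<partial>lborel) = integral\<^sup>L lborel (E1 (of_real (Re s)) c)"
    unfolding eq by simp
  also have "\<dots> = Gamma (of_real (Re s)) / of_real c powr (of_real (Re s))"
    by (rule E1_integral) (use assms in auto)
  also have "\<dots> = of_real (Gamma (Re s) / c powr (Re s))"
    using assms by (simp add: Gamma_complex_of_real powr_of_real)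
  finally show ?thesis by (simp only: of_real_eq_iff)
qed

lemma prod_int:
  fixes f g :: "real \<Rightarrow> 'a::{real_normed_field, banach, second_countable_topology}"
  assumes f: "integrable lborel f" and g: "integrable lborel g"
  shows "integrable lborel (\<lambda>x::real\<times>real. f (fst x) * g (snd x))"
    and "(\<integral>x. f (fst x) * g (snd x) \<partial>(lborel::(real\<times>real) measure)) = integral\<^sup>L lborel f * integral\<^sup>L lborel g"
proof -
  have fm[measurable]: "f \<in> borel_measurable borel" using f by (simp add: borel_measurable_integrable)
  have gm[measurable]: "g \<in> borel_measurable borel" using g by (simp add: borel_measurable_integrable)
  have I: "integrable (lborel \<Otimes>\<^sub>M lborel) (\<lambda>x::real\<times>real. f (fst x) * g (snd x))"
  proof (rule lborel_pair.Fubini_integrable)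
    show "(\<lambda>x::real\<times>real. f (fst x) * g (snd x)) \<in> borel_measurable (lborel \<Otimes>\<^sub>M lborel)" by measurable
    have "integrable lborel (\<lambda>x. norm (f x) * (\<integral>y. norm (g y) \<partial>lborel))"
      using f by (intro integrable_mult_left) simp
    then show "integrable lborel (\<lambda>x. \<integral>y. norm (f (fst (x, y)) * g (snd (x, y))) \<partial>lborel)"
      by (simp add: norm_mult)
    show "AE x in lborel. integrable lborel (\<lambda>y. f (fst (x, y)) * g (snd (x, y)))"
      using g by (simp add: integrable_mult_right)
  qed
  then show "integrable lborel (\<lambda>x::real\<times>real. f (fst x) * g (snd x))" by (simp add: lborel_prod)
  have "(\<integral>x. f (fst x) * g (snd x) \<partial>(lborel \<Otimes>\<^sub>M lborel)) = (\<integral>x. (\<integral>y. f x * g y \<partial>lborel) \<partial>lborel)"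
    using lborel_pair.integral_fst'[OF I] by simp
  also have "\<dots> = (\<integral>x. f x * integral\<^sup>L lborel g \<partial>lborel)" by simp
  also have "\<dots> = integral\<^sup>L lborel f * integral\<^sup>L lborel g" by simp
  finally show "(\<integral>x. f (fst x) * g (snd x) \<partial>(lborel::(real\<times>real) measure)) = integral\<^sup>L lborel f * integral\<^sup>L lborel g"
    by (simp add: lborel_prod)
qed

definition gmn :: "complex \<Rightarrow> complex \<Rightarrow> real \<Rightarrow> complex \<Rightarrow> complex \<Rightarrow> nat \<Rightarrow> nat \<Rightarrow> real \<times> real \<Rightarrow> complex" where
  "gmn s1 s2 a z1 z2 m n x = z1 ^ m * z2 ^ n * (E1 s1 (real m + a) (fst x) * E1 s2 (real m + real (Suc n) + a) (snd x))"

lemma gmn_meas[measurable]: "gmn s1 s2 a z1 z2 m n \<in> borel_measurable borel"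
  unfolding gmn_def borel_prod[symmetric] by measurable

lemma gmn_int:
  assumes "0 < Re s1" "0 < Re s2" "0 < a"
  shows "integrable lborel (gmn s1 s2 a z1 z2 m n)"
    and "integral\<^sup>L lborel (gmn s1 s2 a z1 z2 m n) =
       Gamma s1 * Gamma s2 * (z1 ^ m / of_real (real m + a) powr s1 *
         (z2 ^ n / of_real (real m + real (Suc n) + a) powr s2))"
proof -
  have i1: "integrable lborel (E1 s1 (real m + a))" by (rule E1_int) (use assms in auto)
  have i2: "integrable lborel (E1 s2 (real m + real (Suc n) + a))" by (rule E1_int) (use assms in auto)
  note P = prod_int[OF i1 i2]
  show "integrable lborel (gmn s1 s2 a z1 z2 m n)"
    unfolding gmn_def[abs_def] by (intro integrable_mult_right P(1))
  have "integral\<^sup>L lborel (gmn s1 s2 a z1 z2 m n) = z1 ^ m * z2 ^ n *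
      (integral\<^sup>L lborel (E1 s1 (real m + a)) * integral\<^sup>L lborel (E1 s2 (real m + real (Suc n) + a)))"
    unfolding gmn_def[abs_def] integral_mult_right_zero P(2) ..
  also have "\<dots> = Gamma s1 * Gamma s2 * (z1 ^ m / of_real (real m + a) powr s1 *
         (z2 ^ n / of_real (real m + real (Suc n) + a) powr s2))"
    using assms by (simp add: E1_integral)
  finally show "integral\<^sup>L lborel (gmn s1 s2 a z1 z2 m n) =
       Gamma s1 * Gamma s2 * (z1 ^ m / of_real (real m + a) powr s1 *
         (z2 ^ n / of_real (real m + real (Suc n) + a) powr s2))" .
qed

lemma gmn_norm_int:
  assumes "0 < Re s1" "0 < Re s2" "0 < a"
  shows "(\<integral>x. norm (gmn s1 s2 a z1 z2 m n x) \<partial>lborel) =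
       Gamma (Re s1) * Gamma (Re s2) * (norm z1 ^ m * (real m + a) powr (- Re s1) *
         (norm z2 ^ n * (real m + real (Suc n) + a) powr (- Re s2)))"
proof -
  have i1: "integrable lborel (\<lambda>x. norm (E1 s1 (real m + a) x))" by (intro integrable_norm E1_int) (use assms in auto)
  have i2: "integrable lborel (\<lambda>x. norm (E1 s2 (real m + real (Suc n) + a) x))" by (intro integrable_norm E1_int) (use assms in auto)
  note P = prod_int[OF i1 i2]
  have "(\<integral>x. norm (gmn s1 s2 a z1 z2 m n x) \<partial>lborel) = norm z1 ^ m * norm z2 ^ n *
      ((\<integral>x. norm (E1 s1 (real m + a) x) \<partial>lborel) * (\<integral>x. norm (E1 s2 (real m + real (Suc n) + a) x) \<partial>lborel))"
    unfolding gmn_def norm_mult norm_power integral_mult_right_zero P(2) ..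
  also have "\<dots> = Gamma (Re s1) * Gamma (Re s2) * (norm z1 ^ m * (real m + a) powr (- Re s1) *
         (norm z2 ^ n * (real m + real (Suc n) + a) powr (- Re s2)))"
    using assms by (simp add: E1_norm_integral powr_minus divide_inverse)
  finally show ?thesis .
qed

definition Bf :: "complex \<Rightarrow> complex \<Rightarrow> real \<Rightarrow> real \<times> real \<Rightarrow> complex" where
  "Bf s1 s2 a x = exp (s1 * of_real (fst x)) * exp (s2 * of_real (snd x)) *
     of_real (exp (- a * exp (fst x) - (1 + a) * exp (snd x)))"
definition q1 :: "complex \<Rightarrow> real \<times> real \<Rightarrow> complex" where
  "q1 z1 x = z1 * of_real (exp (- (exp (fst x) + exp (snd x))))"
definition q2 :: "complex \<Rightarrow> real \<times> real \<Rightarrow> complex" where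
  "q2 z2 x = z2 * of_real (exp (- exp (snd x)))"
definition Kf :: "complex \<Rightarrow> complex \<Rightarrow> real \<Rightarrow> complex \<Rightarrow> complex \<Rightarrow> real \<times> real \<Rightarrow> complex" where
  "Kf s1 s2 a z1 z2 x = exp (s1 * of_real (fst x)) * exp (s2 * of_real (snd x)) *
     of_real (exp ((1 - a) * (exp (fst x) + exp (snd x)))) /
     ((of_real (exp (exp (snd x))) - z2) * (of_real (exp (exp (fst x) + exp (snd x))) - z1))"

lemma mult_le_lt1: "c \<le> 1 \<Longrightarrow> e < 1 \<Longrightarrow> 0 < e \<Longrightarrow> c * e < (1::real)"
proof -
  assume "c \<le> 1" "e < 1" "0 < e"
  then have "c * e \<le> 1 * e" by (intro mult_right_mono) auto
  then show ?thesis using \<open>e < 1\<close> by simp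
qed

lemma real_exp_id:
  "exp (- (real m + a) * u) * exp (- (real m + real (Suc n) + a) * v) =
   exp (- a * u - (1 + a) * v) * exp (- (u + v)) ^ m * exp (- v) ^ n"
proof -
  have "exp (- (u + v)) ^ m = exp (real m * (- (u + v)))" by (rule exp_of_nat_mult[symmetric])
  moreover have "exp (- v) ^ n = exp (real n * (- v))" by (rule exp_of_nat_mult[symmetric])
  ultimately show ?thesis by (simp add: exp_add[symmetric] algebra_simps)
qed

lemma aux1: "complex_of_real (exp v) - z = of_real (exp v) * (1 - z * of_real (exp (- v)))"
proof -
  have h1: "complex_of_real (exp v) * of_real (exp (- v)) = 1"
  proof -
    have "complex_of_real (exp v) * of_real (exp (- v)) = of_real (exp v * exp (-v))" by (simp only: of_real_mult)
    also have "\<dots> = 1" by (simp add: exp_minus_inverse)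
    finally show ?thesis .
  qed
  have "of_real (exp v) * (1 - z * of_real (exp (- v))) = of_real (exp v) - z * (complex_of_real (exp v) * of_real (exp (- v)))"
    by (simp add: algebra_simps)
  then show ?thesis using h1 by simp
qed
lemma aux3:
  fixes A X Y :: complex and e p r :: real
  assumes "p \<noteq> 0" "r \<noteq> 0"
  shows "A * of_real (e * p * r) / ((of_real p * Y) * (of_real r * X)) = A * of_real e / (X * Y)"
  using assms by (simp add: field_simps)
lemma aux4:
  fixes z1 z2 P Q a b c d e :: complex
  assumes "a * b = c * d ^ m * e ^ n"
  shows "z1 ^ m * z2 ^ n * (P * a * (Q * b)) = P * Q * c * (z1 * d) ^ m * (z2 * e) ^ n"
proof -
  have "z1 ^ m * z2 ^ n * (P * a * (Q * b)) = z1 ^ m * z2 ^ n * P * Q * (a * b)" by (simp add: mult_ac)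
  also have "\<dots> = z1 ^ m * z2 ^ n * P * Q * (c * d ^ m * e ^ n)" by (simp only: assms)
  also have "\<dots> = P * Q * c * (z1 * d) ^ m * (z2 * e) ^ n" by (simp add: power_mult_distrib mult_ac)
  finally show ?thesis .
qed

lemma gmn_eq: "gmn s1 s2 a z1 z2 m n x = Bf s1 s2 a x * q1 z1 x ^ m * q2 z2 x ^ n"
proof -
  have r: "complex_of_real (exp (- (real m + a) * exp (fst x))) * of_real (exp (- (real m + real (Suc n) + a) * exp (snd x))) =
     of_real (exp (- a * exp (fst x) - (1 + a) * exp (snd x))) * of_real (exp (- (exp (fst x) + exp (snd x)))) ^ m * of_real (exp (- exp (snd x))) ^ n"
    unfolding of_real_mult[symmetric] of_real_power[symmetric] by (simp only: real_exp_id)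
  show ?thesis
    unfolding gmn_def Bf_def q1_def q2_def E1_def by (rule aux4[OF r])
qed

lemma norm_q1: "norm z1 \<le> 1 \<Longrightarrow> norm (q1 z1 x) < 1"
proof -
  assume z: "norm z1 \<le> 1"
  have "exp (fst x) + exp (snd x) > 0" by (simp add: add_pos_pos)
  then have "exp (- (exp (fst x) + exp (snd x))) < 1" by simp
  then have "norm z1 * exp (- (exp (fst x) + exp (snd x))) < 1"
    using z mult_le_lt1 by auto
  then show ?thesis by (simp add: q1_def norm_mult)
qed

lemma norm_q2: "norm z2 \<le> 1 \<Longrightarrow> norm (q2 z2 x) < 1"
proof -
  assume z: "norm z2 \<le> 1"
  have "exp (- exp (snd x)) < 1" by simp
  then have "norm z2 * exp (- exp (snd x)) < 1"
    using z mult_le_lt1 by auto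
  then show ?thesis by (simp add: q2_def norm_mult)
qed

lemma Kf_eq:
  assumes "norm z1 \<le> 1" "norm z2 \<le> 1"
  shows "Kf s1 s2 a z1 z2 x = Bf s1 s2 a x / ((1 - q1 z1 x) * (1 - q2 z2 x))"
proof -
  have e1: "complex_of_real (exp (exp (snd x))) - z2 = of_real (exp (exp (snd x))) * (1 - q2 z2 x)"
    unfolding q2_def by (rule aux1)
  have e2: "complex_of_real (exp (exp (fst x) + exp (snd x))) - z1 = of_real (exp (exp (fst x) + exp (snd x))) * (1 - q1 z1 x)"
    unfolding q1_def by (rule aux1)
  have e3: "exp ((1 - a) * (exp (fst x) + exp (snd x))) = exp (- a * exp (fst x) - (1 + a) * exp (snd x)) * exp (exp (snd x)) * exp (exp (fst x) + exp (snd x))"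
    by (simp add: exp_add[symmetric] algebra_simps)
  show ?thesis
    unfolding Kf_def Bf_def e1 e2 e3 by (rule aux3) simp_all
qed

lemma norm_cpowr: "x > 0 \<Longrightarrow> norm (complex_of_real x powr s) = x powr Re s"
  by (simp add: cpowr_real powr_def)

lemma inner_summable:
  assumes a: "0 < a" and z2: "norm z2 \<le> 1" and s2: "1 < Re s2"
  shows "summable (\<lambda>n. z2 ^ n / complex_of_real (real m + real (Suc n) + a) powr s2)"
    and "norm (\<Sum>n. z2 ^ n / complex_of_real (real m + real (Suc n) + a) powr s2) \<le> (\<Sum>n. (real m + real (Suc n) + a) powr (- Re s2))"
proof -
  have b: "norm (z2 ^ n / complex_of_real (real m + real (Suc n) + a) powr s2) \<le> (real m + real (Suc n) + a) powr (- Re s2)" for n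
  proof -
    have p: "real m + real (Suc n) + a > 0" using a by simp
    have "norm (z2 ^ n / complex_of_real (real m + real (Suc n) + a) powr s2) = norm z2 ^ n * (real m + real (Suc n) + a) powr (- Re s2)"
      unfolding norm_divide norm_power norm_cpowr[OF p] by (simp add: powr_minus divide_inverse)
    also have "\<dots> \<le> 1 * (real m + real (Suc n) + a) powr (- Re s2)"
      by (rule mult_right_mono) (use z2 in \<open>auto intro: power_le_one\<close>)
    finally show ?thesis by simp
  qed
  show sm: "summable (\<lambda>n. z2 ^ n / complex_of_real (real m + real (Suc n) + a) powr s2)"
    by (rule summable_comparison_test'[OF D1[OF a s2] b])
  have sn: "summable (\<lambda>n. norm (z2 ^ n / complex_of_real (real m + real (Suc n) + a) powr s2))"
    by (rule summable_comparison_test'[OF D1[OF a s2]]) (use b in auto)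
  have "norm (\<Sum>n. z2 ^ n / complex_of_real (real m + real (Suc n) + a) powr s2) \<le> (\<Sum>n. norm (z2 ^ n / complex_of_real (real m + real (Suc n) + a) powr s2))"
    by (rule summable_norm[OF sn])
  also have "\<dots> \<le> (\<Sum>n. (real m + real (Suc n) + a) powr (- Re s2))"
    by (rule suminf_le[OF b sn D1[OF a s2]])
  finally show "norm (\<Sum>n. z2 ^ n / complex_of_real (real m + real (Suc n) + a) powr s2) \<le> (\<Sum>n. (real m + real (Suc n) + a) powr (- Re s2))" .
qed

lemma outer_summable:
  assumes a: "0 < a" and z1: "norm z1 \<le> 1" and z2: "norm z2 \<le> 1"
    and s: "0 < Re s1" "1 < Re s2" "2 < Re s1 + Re s2"
  shows "summable (\<lambda>m. z1 ^ m / complex_of_real (real m + a) powr s1 *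
            (\<Sum>n. z2 ^ n / complex_of_real (real m + real (Suc n) + a) powr s2))"
proof (rule summable_comparison_test'[OF D2[OF a s]])
  fix m :: nat
  have p: "real m + a > 0" using a by simp
  have "norm (z1 ^ m / complex_of_real (real m + a) powr s1 *
            (\<Sum>n. z2 ^ n / complex_of_real (real m + real (Suc n) + a) powr s2))
      = norm z1 ^ m * (real m + a) powr (- Re s1) * norm (\<Sum>n. z2 ^ n / complex_of_real (real m + real (Suc n) + a) powr s2)"
    unfolding norm_mult norm_divide norm_power norm_cpowr[OF p] by (simp add: powr_minus divide_inverse)
  also have "\<dots> \<le> 1 * (real m + a) powr (- Re s1) * (\<Sum>n. (real m + real (Suc n) + a) powr (- Re s2))"
    apply (intro mult_mono inner_summable(2)[OF a z2 s(2)])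
    using z1 by (auto intro: power_le_one)
  finally show "norm (z1 ^ m / complex_of_real (real m + a) powr s1 *
            (\<Sum>n. z2 ^ n / complex_of_real (real m + real (Suc n) + a) powr s2))
      \<le> (real m + a) powr (- Re s1) * (\<Sum>n. (real m + real (Suc n) + a) powr (- Re s2))" by simp
qed

lemma geom_sum_norm:
  fixes c r :: complex
  assumes "norm r < 1"
  shows "summable (\<lambda>n. norm (c * r ^ n))" and "(\<lambda>n. c * r ^ n) sums (c / (1 - r))"
proof -
  have "summable (\<lambda>n. norm c * norm r ^ n)"
    by (rule summable_mult[OF summable_geometric]) (use assms in simp)
  then show "summable (\<lambda>n. norm (c * r ^ n))" by (simp add: norm_mult norm_power)
  show "(\<lambda>n. c * r ^ n) sums (c / (1 - r))"
    using sums_mult[OF geometric_sums[OF assms], of c] by (simp add: divide_inverse)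
qed

theorem MI:
  fixes s1 s2 z1 z2 :: complex and a :: real
  assumes a: "0 < a" and z1: "norm z1 \<le> 1" and z2: "norm z2 \<le> 1"
    and s: "0 < Re s1" "1 < Re s2" "2 < Re s1 + Re s2"
  shows "integrable lborel (Kf s1 s2 a z1 z2)"
    and "integral\<^sup>L lborel (Kf s1 s2 a z1 z2) = Gamma s1 * Gamma s2 * Phi2 s1 s2 a z1 z2"
proof -
  let ?g = "gmn s1 s2 a z1 z2"
  have s2': "0 < Re s2" using s by simp
  define N where "N m n = Gamma (Re s1) * Gamma (Re s2) * (norm z1 ^ m * (real m + a) powr (- Re s1) *
         (norm z2 ^ n * (real m + real (Suc n) + a) powr (- Re s2)))" for m n
  define C where "C = Gamma (Re s1) * Gamma (Re s2)"
  have C: "C > 0" using s by (simp add: C_def)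
  have Nle: "N m n \<le> C * ((real m + a) powr (- Re s1) * (real m + real (Suc n) + a) powr (- Re s2))" for m n
  proof -
    have "norm z1 ^ m * (real m + a) powr (- Re s1) * (norm z2 ^ n * (real m + real (Suc n) + a) powr (- Re s2))
        \<le> 1 * (real m + a) powr (- Re s1) * (1 * (real m + real (Suc n) + a) powr (- Re s2))"
      by (intro mult_mono) (use z1 z2 in \<open>auto intro: power_le_one\<close>)
    then show ?thesis unfolding N_def C_def[symmetric] using C by (simp add: mult_left_mono)
  qed
  have N0: "N m n \<ge> 0" for m n using s by (simp add: N_def)
  have Nsum: "summable (\<lambda>n. N m n)" for m
  proof (rule summable_comparison_test')
    show "summable (\<lambda>n. C * ((real m + a) powr (- Re s1) * (real m + real (Suc n) + a) powr (- Re s2)))"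
      by (intro summable_mult D1[OF a s(2)])
    show "norm (N m n) \<le> C * ((real m + a) powr (- Re s1) * (real m + real (Suc n) + a) powr (- Re s2))" for n
      using Nle N0 by simp
  qed
  have NN: "summable (\<lambda>m. \<Sum>n. N m n)"
  proof (rule summable_comparison_test'[OF summable_mult[OF D2[OF a s], where c=C]])
    fix m
    have "(\<Sum>n. N m n) \<le> (\<Sum>n. C * ((real m + a) powr (- Re s1) * (real m + real (Suc n) + a) powr (- Re s2)))"
      by (rule suminf_le[OF Nle Nsum]) (intro summable_mult D1[OF a s(2)])
    also have "\<dots> = C * ((real m + a) powr (- Re s1) * (\<Sum>n. (real m + real (Suc n) + a) powr (- Re s2)))"
      by (simp only: suminf_mult[OF summable_mult[OF D1[OF a s(2)]]] suminf_mult[OF D1[OF a s(2)]])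
    finally show "norm (\<Sum>n. N m n) \<le> C * ((real m + a) powr (- Re s1) * (\<Sum>n. (real m + real (Suc n) + a) powr (- Re s2)))"
      using suminf_nonneg[OF Nsum N0] by simp
  qed
  have gi: "integrable lborel (?g m n)" for m n by (rule gmn_int(1)) (use s a in auto)
  have gni: "(\<integral>x. norm (?g m n x) \<partial>lborel) = N m n" for m n
    unfolding N_def by (rule gmn_norm_int) (use s a in auto)
  have gsum: "summable (\<lambda>n. norm (?g m n x))" "(\<lambda>n. ?g m n x) sums (Bf s1 s2 a x * q1 z1 x ^ m / (1 - q2 z2 x))" for m x
    unfolding gmn_eq by (rule geom_sum_norm[OF norm_q2[OF z2]])+
  define G where "G m x = (\<Sum>n. ?g m n x)" for m x
  have Geq: "G m x = Bf s1 s2 a x / (1 - q2 z2 x) * q1 z1 x ^ m" for m x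
    using sums_unique[OF gsum(2)] by (simp add: G_def)
  have Gi: "integrable lborel (G m)" and GI: "integral\<^sup>L lborel (G m) = (\<Sum>n. integral\<^sup>L lborel (?g m n))" for m
    unfolding G_def[abs_def]
    by (rule integrable_suminf integral_suminf; use gi gsum gni Nsum in simp)+
  have Hi: "integrable lborel (\<lambda>x. \<Sum>n. norm (?g m n x))" and HI: "(\<integral>x. (\<Sum>n. norm (?g m n x)) \<partial>lborel) = (\<Sum>n. N m n)" for m
    by (rule integrable_suminf integral_suminf[THEN trans]; use gi gsum gni Nsum in simp)+
  have Gnorm: "(\<integral>x. norm (G m x) \<partial>lborel) \<le> (\<Sum>n. N m n)" for m
  proof -
    have "(\<integral>x. norm (G m x) \<partial>lborel) \<le> (\<integral>x. (\<Sum>n. norm (?g m n x)) \<partial>lborel)"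
      by (rule integral_mono[OF integrable_norm[OF Gi] Hi]) (unfold G_def, rule summable_norm[OF gsum(1)])
    then show ?thesis using HI by simp
  qed
  have Ksum: "(\<lambda>m. G m x) sums Kf s1 s2 a z1 z2 x" "summable (\<lambda>m. norm (G m x))" for x
  proof -
    show "(\<lambda>m. G m x) sums Kf s1 s2 a z1 z2 x"
      unfolding Geq Kf_eq[OF z1 z2] mult.commute[of "1 - q1 z1 x" "1 - q2 z2 x"] divide_divide_eq_left[symmetric]
      by (rule geom_sum_norm(2)[OF norm_q1[OF z1]])
    show "summable (\<lambda>m. norm (G m x))"
      unfolding Geq by (rule geom_sum_norm(1)[OF norm_q1[OF z1]])
  qed
  have Gn_sum: "summable (\<lambda>m. \<integral>x. norm (G m x) \<partial>lborel)"
    by (rule summable_comparison_test'[OF NN]) (use Gnorm in auto)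
  have KI: "integrable lborel (\<lambda>x. \<Sum>m. G m x)"
    by (rule integrable_suminf) (use Gi Ksum Gn_sum in auto)
  have KI2: "(\<integral>x. (\<Sum>m. G m x) \<partial>lborel) = (\<Sum>m. integral\<^sup>L lborel (G m))"
    by (rule integral_suminf) (use Gi Ksum Gn_sum in auto)
  have Keq: "(\<lambda>x. \<Sum>m. G m x) = Kf s1 s2 a z1 z2"
  proof
    fix x show "(\<Sum>m. G m x) = Kf s1 s2 a z1 z2 x" using sums_unique[OF Ksum(1)[of x]] by simp
  qed
  show "integrable lborel (Kf s1 s2 a z1 z2)" using KI Keq by simp
  have "integral\<^sup>L lborel (Kf s1 s2 a z1 z2) = (\<Sum>m. \<Sum>n. integral\<^sup>L lborel (?g m n))"
    using KI2 Keq GI by simp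
  also have "\<dots> = (\<Sum>m. Gamma s1 * Gamma s2 * (z1 ^ m / complex_of_real (real m + a) powr s1 *
            (\<Sum>n. z2 ^ n / complex_of_real (real m + real (Suc n) + a) powr s2)))"
  proof (rule suminf_cong)
    fix m
    have "(\<Sum>n. integral\<^sup>L lborel (?g m n)) = (\<Sum>n. (Gamma s1 * Gamma s2 * (z1 ^ m / complex_of_real (real m + a) powr s1)) *
          (z2 ^ n / complex_of_real (real m + real (Suc n) + a) powr s2))"
      using gmn_int(2)[of s1 s2 a] s a by (simp add: mult.assoc)
    also have "\<dots> = (Gamma s1 * Gamma s2 * (z1 ^ m / complex_of_real (real m + a) powr s1)) *
          (\<Sum>n. z2 ^ n / complex_of_real (real m + real (Suc n) + a) powr s2)"
      by (rule suminf_mult[OF inner_summable(1)[OF a z2 s(2)]])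
    finally show "(\<Sum>n. integral\<^sup>L lborel (?g m n)) = Gamma s1 * Gamma s2 * (z1 ^ m / complex_of_real (real m + a) powr s1 *
            (\<Sum>n. z2 ^ n / complex_of_real (real m + real (Suc n) + a) powr s2))" by (simp add: mult.assoc)
  qed
  also have "\<dots> = Gamma s1 * Gamma s2 * Phi2 s1 s2 a z1 z2"
    unfolding Phi2_def by (rule suminf_mult[OF outer_summable[OF a z1 z2 s]])
  finally show "integral\<^sup>L lborel (Kf s1 s2 a z1 z2) = Gamma s1 * Gamma s2 * Phi2 s1 s2 a z1 z2" .
qed

definition kr :: "real \<Rightarrow> real \<Rightarrow> real \<Rightarrow> real \<Rightarrow> real \<Rightarrow> real \<times> real \<Rightarrow> real" where
  "kr \<sigma>1 \<sigma>2 a r1 r2 x = exp (\<sigma>1 * fst x) * exp (\<sigma>2 * snd x) * exp ((1 - a) * (exp (fst x) + exp (snd x))) /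
     ((exp (exp (snd x)) - r2) * (exp (exp (fst x) + exp (snd x)) - r1))"

lemma alg1:
  fixes C1 C2 :: complex and A B E X Y r1 r2 :: real
  shows "of_real A * C1 * (of_real B * C2) * of_real E / ((of_real X - of_real r2) * (of_real Y - of_real r1))
     = of_real (A * B * E / ((X - r2) * (Y - r1))) * (C1 * C2)"
  by (simp add: of_real_divide of_real_mult of_real_diff mult_ac divide_inverse)

lemma Kf_real:
  "Kf (Complex \<sigma>1 t1) (Complex \<sigma>2 t2) a (of_real r1) (of_real r2) x =
   of_real (kr \<sigma>1 \<sigma>2 a r1 r2 x) * cis (t1 * fst x + t2 * snd x)"
proof -
  have e: "exp (Complex \<sigma> t * of_real y) = of_real (exp (\<sigma> * y)) * cis (t * y)" for \<sigma> t y
    by (subst exp_eq_polar) simp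
  show ?thesis
    unfolding Kf_def kr_def e alg1 by (simp add: cis_mult distrib_left mult.commute)
qed

lemma AE_lborel_nontriv: "\<not> (AE x in (lborel :: (real \<times> real) measure). False)"
proof
  assume "AE x in (lborel :: (real \<times> real) measure). False"
  then have "ae_filter (lborel :: (real \<times> real) measure) = bot" using trivial_limit_def by blast
  then show False by (simp add: ae_filter_eq_bot_iff)
qed

theorem PartA:
  fixes a :: real and z1 z2 :: complex
  assumes a: "0 < a" and z1: "norm z1 \<le> 1" and z2: "norm z2 \<le> 1" and zr: "z1 \<in> \<real>" "z2 \<in> \<real>"
    and s: "0 < \<sigma>1" "1 < \<sigma>2" "2 < \<sigma>1 + \<sigma>2"
  shows "(\<forall>x. P_dens \<sigma>1 \<sigma>2 a z1 z2 x \<in> \<real> \<and> 0 \<le> Re (P_dens \<sigma>1 \<sigma>2 a z1 z2 x)) \<and>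
             prob_space (density lborel (\<lambda>x. ennreal (Re (P_dens \<sigma>1 \<sigma>2 a z1 z2 x)))) \<and>
             (\<forall>t1 t2. F_fun \<sigma>1 \<sigma>2 a z1 z2 t1 t2 =
                char2 (density lborel (\<lambda>x. ennreal (Re (P_dens \<sigma>1 \<sigma>2 a z1 z2 x)))) t1 t2)"
proof -
  obtain r1 r2 where r: "z1 = of_real r1" "z2 = of_real r2" using zr by (auto elim!: Reals_cases)
  have r1: "r1 \<le> 1" using z1 r by simp
  have r2: "r2 \<le> 1" using z2 r by simp
  let ?k = "kr \<sigma>1 \<sigma>2 a r1 r2"
  have kpos: "?k x > 0" for x
  proof -
    have h1: "exp (exp (snd x)) > 1" by simp
    have h2: "exp (exp (fst x) + exp (snd x)) > 1" by (simp add: add_pos_pos)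
    have "exp (exp (snd x)) - r2 > 0" "exp (exp (fst x) + exp (snd x)) - r1 > 0" using h1 h2 r1 r2 by linarith+
    then show ?thesis unfolding kr_def by (intro divide_pos_pos mult_pos_pos) auto
  qed
  have knn: "AE x in lborel. 0 \<le> ?k x" by (rule AE_I2, rule less_imp_le, rule kpos)
  have kmeas[measurable]: "?k \<in> borel_measurable borel"
    unfolding kr_def[abs_def] borel_prod[symmetric] by measurable
  have MIt: "integrable lborel (Kf (Complex \<sigma>1 t1) (Complex \<sigma>2 t2) a z1 z2)"
      "integral\<^sup>L lborel (Kf (Complex \<sigma>1 t1) (Complex \<sigma>2 t2) a z1 z2) = f_fun \<sigma>1 \<sigma>2 a z1 z2 t1 t2" for t1 t2
    using MI[of a z1 z2 "Complex \<sigma>1 t1" "Complex \<sigma>2 t2"] a z1 z2 s by (auto simp: f_fun_def)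
  have K0: "Kf (Complex \<sigma>1 0) (Complex \<sigma>2 0) a z1 z2 = (\<lambda>x. complex_of_real (?k x))"
    unfolding r by (rule ext, subst Kf_real) simp
  have kint: "integrable lborel ?k"
    using MIt(1)[of 0 0] unfolding K0 complex_of_real_integrable_eq .
  define F0 where "F0 = integral\<^sup>L lborel ?k"
  have f0: "f_fun \<sigma>1 \<sigma>2 a z1 z2 0 0 = of_real F0"
    using MIt(2)[of 0 0] unfolding K0 F0_def by simp
  have F0: "F0 > 0"
  proof -
    have "F0 \<ge> 0" unfolding F0_def by (rule integral_nonneg_AE, rule AE_I2, rule less_imp_le, rule kpos)
    moreover have "F0 \<noteq> 0"
    proof
      assume "F0 = 0"
      then have "AE x in lborel. ?k x = 0"
        unfolding F0_def by (subst (asm) integral_nonneg_eq_0_iff_AE[OF kint knn])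
      then have "AE x in (lborel :: (real \<times> real) measure). False" by (rule AE_mp, intro AE_I2 impI) (use kpos in \<open>auto simp: less_le\<close>)
      then show False using AE_lborel_nontriv by blast
    qed
    ultimately show ?thesis by simp
  qed
  have kFnn: "AE x in lborel. 0 \<le> ?k x / F0" by (rule AE_I2, rule less_imp_le, rule divide_pos_pos[OF kpos F0])
  have P: "P_dens \<sigma>1 \<sigma>2 a z1 z2 x = of_real (?k x / F0)" for x
    unfolding P_dens_def Let_def f0 r kr_def f0[unfolded r]
    by (simp add: of_real_divide of_real_mult of_real_diff mult_ac divide_inverse)
  have ReP: "(\<lambda>x. ennreal (Re (P_dens \<sigma>1 \<sigma>2 a z1 z2 x))) = (\<lambda>x. ennreal (?k x / F0))"
    unfolding P by simp
  have kFint: "integrable lborel (\<lambda>x. ?k x / F0)" using kint by simp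
  have part1: "\<forall>x. P_dens \<sigma>1 \<sigma>2 a z1 z2 x \<in> \<real> \<and> 0 \<le> Re (P_dens \<sigma>1 \<sigma>2 a z1 z2 x)"
    unfolding P using kpos F0 by (auto intro: less_imp_le)
  have part2: "prob_space (density lborel (\<lambda>x. ennreal (?k x / F0)))"
  proof (rule prob_spaceI)
    have "emeasure (density lborel (\<lambda>x. ennreal (?k x / F0))) (space (density lborel (\<lambda>x. ennreal (?k x / F0))))
        = (\<integral>\<^sup>+ x. ennreal (?k x / F0) \<partial>lborel)"
      by (simp add: emeasure_density)
    also have "\<dots> = ennreal (\<integral>x. ?k x / F0 \<partial>lborel)"
      by (rule nn_integral_eq_integral[OF kFint kFnn])
    also have "(\<integral>x. ?k x / F0 \<partial>lborel) = 1" using F0 by (simp add: F0_def)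
    finally show "emeasure (density lborel (\<lambda>x. ennreal (?k x / F0))) (space (density lborel (\<lambda>x. ennreal (?k x / F0)))) = 1"
      by simp
  qed
  have part3: "F_fun \<sigma>1 \<sigma>2 a z1 z2 t1 t2 = char2 (density lborel (\<lambda>x. ennreal (?k x / F0))) t1 t2" for t1 t2
  proof -
    have "char2 (density lborel (\<lambda>x. ennreal (?k x / F0))) t1 t2 = (\<integral>x. (?k x / F0) *\<^sub>R cis (t1 * fst x + t2 * snd x) \<partial>lborel)"
      unfolding char2_def
    proof (rule integral_density[OF _ _ kFnn])
      have "(\<lambda>x::real\<times>real. cis (t1 * fst x + t2 * snd x)) \<in> borel_measurable borel"
        by (intro borel_measurable_continuous_onI continuous_intros)
      then show "(\<lambda>x::real\<times>real. cis (t1 * fst x + t2 * snd x)) \<in> borel_measurable lborel" by simp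
      show "(\<lambda>x. ?k x / F0) \<in> borel_measurable lborel" by simp
    qed
    also have "\<dots> = (\<integral>x. Kf (Complex \<sigma>1 t1) (Complex \<sigma>2 t2) a z1 z2 x / of_real F0 \<partial>lborel)"
      unfolding r Kf_real by (simp add: scaleR_conv_of_real of_real_divide)
    also have "\<dots> = f_fun \<sigma>1 \<sigma>2 a z1 z2 t1 t2 / of_real F0"
      using MIt(2)[of t1 t2] by simp
    also have "\<dots> = F_fun \<sigma>1 \<sigma>2 a z1 z2 t1 t2" unfolding F_fun_def f0 ..
    finally show ?thesis by simp
  qed
  show ?thesis unfolding ReP using part1 part2 part3 by blast
qed

lemma Gamma_ne0: "0 < Re z \<Longrightarrow> Gamma z \<noteq> 0"
  by (rule Gamma_nonzero) (auto elim!: nonpos_Ints_cases)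

lemma cnj_suminf: "summable f \<Longrightarrow> cnj (suminf f) = (\<Sum>n. cnj (f n))"
  by (metis sums_cnj summable_sums sums_unique)

lemma cnj_cpowr: "x > 0 \<Longrightarrow> cnj (complex_of_real x powr s) = complex_of_real x powr cnj s"
  by (simp add: cpowr_real exp_cnj)

lemma cnj_Phi2:
  assumes a: "0 < a" and z1: "norm z1 \<le> 1" and z2: "norm z2 \<le> 1"
    and s: "0 < Re s1" "1 < Re s2" "2 < Re s1 + Re s2"
  shows "cnj (Phi2 s1 s2 a z1 z2) = Phi2 (cnj s1) (cnj s2) a (cnj z1) (cnj z2)"
proof -
  have inner: "cnj (\<Sum>n. z2 ^ n / complex_of_real (real m + real (Suc n) + a) powr s2) =
     (\<Sum>n. cnj z2 ^ n / complex_of_real (real m + real (Suc n) + a) powr cnj s2)" for m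
  proof -
    have p: "\<And>n. real m + real (Suc n) + a > 0" using a by simp
    show ?thesis
      by (subst cnj_suminf[OF inner_summable(1)[OF a z2 s(2)]]) (simp only: complex_cnj_divide complex_cnj_power cnj_cpowr[OF p])
  qed
  have p0: "\<And>m. real m + a > 0" using a by simp
  show ?thesis
    unfolding Phi2_def
    by (subst cnj_suminf[OF outer_summable[OF a z1 z2 s]]) (simp only: complex_cnj_mult complex_cnj_divide complex_cnj_power cnj_cpowr[OF p0] inner)
qed

lemma cnj_f_fun:
  assumes a: "0 < a" and z1: "norm z1 \<le> 1" and z2: "norm z2 \<le> 1"
    and s: "0 < \<sigma>1" "1 < \<sigma>2" "2 < \<sigma>1 + \<sigma>2"
  shows "cnj (f_fun \<sigma>1 \<sigma>2 a z1 z2 t1 t2) = f_fun \<sigma>1 \<sigma>2 a (cnj z1) (cnj z2) (- t1) (- t2)"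
  unfolding f_fun_def using cnj_Phi2[of a z1 z2 "Complex \<sigma>1 t1" "Complex \<sigma>2 t2"] assms
  by (simp add: cnj_Gamma complex_cnj)

lemma char2_0:
  assumes "prob_space M"
  shows "char2 M 0 0 = 1"
  using prob_space.prob_space[OF assms] by (simp add: char2_def)

lemma char2_neg: "char2 M (- t1) (- t2) = cnj (char2 M t1 t2)"
proof -
  have "char2 M (- t1) (- t2) = (CLINT x|M. cnj (cis (t1 * fst x + t2 * snd x)))"
    unfolding char2_def cis_cnj by (simp add: algebra_simps)
  then show ?thesis by (simp only: Bochner_Integration.integral_cnj char2_def)
qed

lemma ident:
  fixes a \<sigma>1 \<sigma>2 \<tau> :: real and z1 z2 :: complex
  assumes a: "0 < a" and z1: "norm z1 \<le> 1" and z2: "norm z2 \<le> 1"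
    and s: "0 < \<sigma>1" "1 < \<sigma>2" "2 < \<sigma>1 + \<sigma>2"
    and ch: "is_char_fun2 (F_fun \<sigma>1 \<sigma>2 a z1 z2)"
  shows "Phi2 (Complex \<sigma>1 0) (Complex \<sigma>2 0) a z1 z2 \<noteq> 0"
    and "Phi2 (Complex \<sigma>1 0) (Complex \<sigma>2 \<tau>) a z1 z2 * Phi2 (Complex \<sigma>1 0) (Complex \<sigma>2 0) a (cnj z1) (cnj z2) =
         Phi2 (Complex \<sigma>1 0) (Complex \<sigma>2 \<tau>) a (cnj z1) (cnj z2) * Phi2 (Complex \<sigma>1 0) (Complex \<sigma>2 0) a z1 z2"
proof -
  obtain M where M: "prob_space M" and FM: "\<And>t1 t2. F_fun \<sigma>1 \<sigma>2 a z1 z2 t1 t2 = char2 M t1 t2"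
    using ch unfolding is_char_fun2_def by blast
  define f0 where "f0 = f_fun \<sigma>1 \<sigma>2 a z1 z2 0 0"
  have "F_fun \<sigma>1 \<sigma>2 a z1 z2 0 0 = 1" using FM char2_0[OF M] by simp
  then have f0: "f0 \<noteq> 0" unfolding F_fun_def f0_def by auto
  have "F_fun \<sigma>1 \<sigma>2 a z1 z2 0 \<tau> = cnj (F_fun \<sigma>1 \<sigma>2 a z1 z2 0 (- \<tau>))"
    using char2_neg[of M 0 "- \<tau>"] FM by simp
  also have "\<dots> = cnj (f_fun \<sigma>1 \<sigma>2 a z1 z2 0 (- \<tau>)) / cnj f0" unfolding F_fun_def f0_def by simp
  also have "\<dots> = f_fun \<sigma>1 \<sigma>2 a (cnj z1) (cnj z2) 0 \<tau> / f_fun \<sigma>1 \<sigma>2 a (cnj z1) (cnj z2) 0 0"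
    unfolding f0_def using cnj_f_fun[OF a z1 z2 s, of 0 "- \<tau>"] cnj_f_fun[OF a z1 z2 s, of 0 0] by simp
  finally have eq: "f_fun \<sigma>1 \<sigma>2 a z1 z2 0 \<tau> / f0 = f_fun \<sigma>1 \<sigma>2 a (cnj z1) (cnj z2) 0 \<tau> / f_fun \<sigma>1 \<sigma>2 a (cnj z1) (cnj z2) 0 0"
    unfolding F_fun_def f0_def .
  have f0c: "f_fun \<sigma>1 \<sigma>2 a (cnj z1) (cnj z2) 0 0 \<noteq> 0"
    using cnj_f_fun[OF a z1 z2 s, of 0 0] f0 unfolding f0_def by (metis complex_cnj_zero_iff neg_0_equal_iff_equal)
  have eq2: "f_fun \<sigma>1 \<sigma>2 a z1 z2 0 \<tau> * f_fun \<sigma>1 \<sigma>2 a (cnj z1) (cnj z2) 0 0 = f_fun \<sigma>1 \<sigma>2 a (cnj z1) (cnj z2) 0 \<tau> * f0"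
    using eq f0 f0c by (simp add: field_simps)
  have G: "Gamma (Complex \<sigma>1 0) \<noteq> 0" "Gamma (Complex \<sigma>2 0) \<noteq> 0" "Gamma (Complex \<sigma>2 \<tau>) \<noteq> 0"
    using s by (auto intro!: Gamma_ne0)
  show "Phi2 (Complex \<sigma>1 0) (Complex \<sigma>2 0) a z1 z2 \<noteq> 0" using f0 unfolding f0_def f_fun_def by auto
  from eq2 have "(Gamma (Complex \<sigma>1 0) * Gamma (Complex \<sigma>2 \<tau>) * Gamma (Complex \<sigma>1 0) * Gamma (Complex \<sigma>2 0)) *
      (Phi2 (Complex \<sigma>1 0) (Complex \<sigma>2 \<tau>) a z1 z2 * Phi2 (Complex \<sigma>1 0) (Complex \<sigma>2 0) a (cnj z1) (cnj z2)) =
      (Gamma (Complex \<sigma>1 0) * Gamma (Complex \<sigma>2 \<tau>) * Gamma (Complex \<sigma>1 0) * Gamma (Complex \<sigma>2 0)) *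
      (Phi2 (Complex \<sigma>1 0) (Complex \<sigma>2 \<tau>) a (cnj z1) (cnj z2) * Phi2 (Complex \<sigma>1 0) (Complex \<sigma>2 0) a z1 z2)"
    unfolding f0_def f_fun_def by (simp add: mult_ac)
  then show "Phi2 (Complex \<sigma>1 0) (Complex \<sigma>2 \<tau>) a z1 z2 * Phi2 (Complex \<sigma>1 0) (Complex \<sigma>2 0) a (cnj z1) (cnj z2) =
         Phi2 (Complex \<sigma>1 0) (Complex \<sigma>2 \<tau>) a (cnj z1) (cnj z2) * Phi2 (Complex \<sigma>1 0) (Complex \<sigma>2 0) a z1 z2"
    using G by simp
qed

definition Z1 :: real where "Z1 = (\<Sum>n::nat. (real n + 1) powr (-2))"

lemma Z1_summable: "summable (\<lambda>n::nat. (real n + 1) powr (-2))"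
  using sum_powr_shift[of 1 2] by simp

lemma TL:
  fixes w s :: complex and b :: real
  assumes b: "1 \<le> b" and s: "2 \<le> Re s" and w: "norm w \<le> 1"
  shows "summable (\<lambda>n. w ^ n / complex_of_real (real n + b) powr s)"
    and "norm (\<Sum>n. w ^ n / complex_of_real (real n + b) powr s) \<le> b powr (2 - Re s) * Z1"
proof -
  have bd: "norm (w ^ n / complex_of_real (real n + b) powr s) \<le> b powr (2 - Re s) * (real n + 1) powr (-2)" for n
  proof -
    have p: "real n + b > 0" using b by simp
    have "norm (w ^ n / complex_of_real (real n + b) powr s) = norm w ^ n * (real n + b) powr (- Re s)"
      unfolding norm_divide norm_power norm_cpowr[OF p] by (simp add: powr_minus divide_inverse)
    also have "\<dots> \<le> 1 * (real n + b) powr (- Re s)"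
      by (rule mult_right_mono) (use w in \<open>auto intro: power_le_one\<close>)
    also have "(real n + b) powr (- Re s) = (real n + b) powr (2 - Re s) * (real n + b) powr (-2)"
      using p by (simp add: powr_add[symmetric])
    also have "\<dots> \<le> b powr (2 - Re s) * (real n + 1) powr (-2)"
      apply (rule mult_mono)
      apply (rule powr_mono2') using s b apply auto[3]
      apply (rule powr_mono2') using b apply auto[3]
      by auto
    finally show ?thesis by simp
  qed
  have sb: "summable (\<lambda>n. b powr (2 - Re s) * (real n + 1) powr (-2))"
    by (rule summable_mult[OF Z1_summable])
  show sm: "summable (\<lambda>n. w ^ n / complex_of_real (real n + b) powr s)"
    by (rule summable_comparison_test'[OF sb bd])
  have sn: "summable (\<lambda>n. norm (w ^ n / complex_of_real (real n + b) powr s))"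
    by (rule summable_comparison_test'[OF sb]) (use bd in auto)
  have "norm (\<Sum>n. w ^ n / complex_of_real (real n + b) powr s) \<le> (\<Sum>n. norm (w ^ n / complex_of_real (real n + b) powr s))"
    by (rule summable_norm[OF sn])
  also have "\<dots> \<le> (\<Sum>n. b powr (2 - Re s) * (real n + 1) powr (-2))"
    by (rule suminf_le[OF bd sn sb])
  also have "\<dots> = b powr (2 - Re s) * Z1" unfolding Z1_def by (rule suminf_mult[OF Z1_summable])
  finally show "norm (\<Sum>n. w ^ n / complex_of_real (real n + b) powr s) \<le> b powr (2 - Re s) * Z1" .
qed

lemma split1: "summable f \<Longrightarrow> suminf f = f 0 + (\<Sum>n. f (Suc n))"
  for f :: "nat \<Rightarrow> 'a::{real_normed_vector}"
  by (simp add: suminf_split_head)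

lemma split2: "summable f \<Longrightarrow> suminf f = f 0 + f 1 + (\<Sum>n. f (Suc (Suc n)))"
  for f :: "nat \<Rightarrow> 'a::{real_normed_vector}"
proof -
  assume sf: "summable f"
  then have "summable (\<lambda>n. f (Suc n))" by (simp add: summable_Suc_iff)
  then show ?thesis using split1[OF sf] split1[of "\<lambda>n. f (Suc n)"] by simp
qed

definition KK :: "real \<Rightarrow> real \<Rightarrow> real" where
  "KK \<sigma>1 a = (3 + a) powr 2 * Z1 * (a powr (-\<sigma>1) + (1 + a) powr (-\<sigma>1) + (\<Sum>m::nat. (real m + (2 + a)) powr (-\<sigma>1)))"

lemma alg2:
  fixes Ca P Q B w1 w2 T Rs :: complex
  shows "(1 / Ca * (1 / P + w2 / Q + w2 ^ 2 * T) + w1 / B * (1 / Q + w2 * T) + Rs) - 1 / Ca / P - (w2 / Ca + w1 / B) / Q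
     = 1 / Ca * w2 ^ 2 * T + w1 / B * w2 * T + Rs"
  by (simp add: divide_inverse algebra_simps)

lemma DEC:
  fixes \<sigma>1 a :: real and w1 w2 s :: complex
  assumes a: "0 < a" and \<sigma>1: "1 < \<sigma>1" and w1: "norm w1 \<le> 1" and w2: "norm w2 \<le> 1" and s: "2 \<le> Re s"
  shows "norm (Phi2 (Complex \<sigma>1 0) s a w1 w2
           - (1 / complex_of_real a powr (Complex \<sigma>1 0)) / complex_of_real (1 + a) powr s
           - (w2 / complex_of_real a powr (Complex \<sigma>1 0) + w1 / complex_of_real (1 + a) powr (Complex \<sigma>1 0))
               / complex_of_real (2 + a) powr s)
         \<le> KK \<sigma>1 a * (3 + a) powr (- Re s)"
proof -
  define S1 where "S1 = Complex \<sigma>1 0"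
  have ReS1: "Re S1 = \<sigma>1" by (simp add: S1_def)
  define Y where "Y m = (\<Sum>n. w2 ^ n / complex_of_real (real m + real (Suc n) + a) powr s)" for m
  define X where "X m = w1 ^ m / complex_of_real (real m + a) powr S1 * Y m" for m
  define T where "T = (\<Sum>n. w2 ^ n / complex_of_real (real n + (3 + a)) powr s)"
  define Tb where "Tb = (3 + a) powr (2 - Re s) * Z1"
  define A where "A = 1 / complex_of_real a powr S1"
  have s1: "1 < Re s" using s by simp
  have Xs: "summable X" unfolding X_def Y_def
    by (rule outer_summable[OF a w1 w2]) (use s \<sigma>1 ReS1 in auto)
  have Ys: "summable (\<lambda>n. w2 ^ n / complex_of_real (real m + real (Suc n) + a) powr s)" for m
    by (rule inner_summable(1)[OF a w2 s1])
  have TLb: "summable (\<lambda>n. w2 ^ n / complex_of_real (real n + b) powr s)"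
      "norm (\<Sum>n. w2 ^ n / complex_of_real (real n + b) powr s) \<le> b powr (2 - Re s) * Z1" if "1 \<le> b" for b
    using TL[OF that s w2] by auto
  have Tnorm: "norm T \<le> Tb" unfolding T_def Tb_def using TLb(2)[of "3 + a"] a by simp
  have Z1nn: "0 \<le> Z1" unfolding Z1_def by (rule suminf_nonneg[OF Z1_summable]) simp
  have Tbnn: "0 \<le> Tb" unfolding Tb_def using Z1nn by simp
  have Y0: "Y 0 = 1 / complex_of_real (1 + a) powr s + w2 / complex_of_real (2 + a) powr s + w2 ^ 2 * T"
  proof -
    have "Y 0 = 1 / complex_of_real (1 + a) powr s + w2 / complex_of_real (2 + a) powr s +
        (\<Sum>n. w2 ^ Suc (Suc n) / complex_of_real (real 0 + real (Suc (Suc (Suc n))) + a) powr s)"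
      unfolding Y_def by (subst split2[OF Ys]) (simp add: add_ac)
    also have "(\<Sum>n. w2 ^ Suc (Suc n) / complex_of_real (real 0 + real (Suc (Suc (Suc n))) + a) powr s)
        = (\<Sum>n. w2 ^ 2 * (w2 ^ n / complex_of_real (real n + (3 + a)) powr s))"
      by (rule suminf_cong) (simp add: add_ac power2_eq_square)
    also have "\<dots> = w2 ^ 2 * T" unfolding T_def by (rule suminf_mult[OF TLb(1)]) (use a in simp)
    finally show ?thesis .
  qed
  have Y1: "Y 1 = 1 / complex_of_real (2 + a) powr s + w2 * T"
  proof -
    have "Y 1 = 1 / complex_of_real (2 + a) powr s +
        (\<Sum>n. w2 ^ Suc n / complex_of_real (real 1 + real (Suc (Suc n)) + a) powr s)"
      unfolding Y_def by (subst split1[OF Ys]) (simp add: add_ac)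
    also have "(\<Sum>n. w2 ^ Suc n / complex_of_real (real 1 + real (Suc (Suc n)) + a) powr s)
        = (\<Sum>n. w2 * (w2 ^ n / complex_of_real (real n + (3 + a)) powr s))"
      by (rule suminf_cong) (simp add: add_ac)
    also have "\<dots> = w2 * T" unfolding T_def by (rule suminf_mult[OF TLb(1)]) (use a in simp)
    finally show ?thesis .
  qed
  have Xt: "norm (X (Suc (Suc m))) \<le> (real m + (2 + a)) powr (- \<sigma>1) * Tb" for m
  proof -
    have p: "real (Suc (Suc m)) + a > 0" using a by simp
    have Yeq: "Y (Suc (Suc m)) = (\<Sum>n. w2 ^ n / complex_of_real (real n + (real m + 3 + a)) powr s)"
      unfolding Y_def by (rule suminf_cong) (simp add: add_ac)
    have "norm (Y (Suc (Suc m))) \<le> (real m + 3 + a) powr (2 - Re s) * Z1"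
      unfolding Yeq by (rule TLb(2)) (use a in simp)
    also have "\<dots> \<le> Tb" unfolding Tb_def
      by (rule mult_right_mono[OF powr_mono2' Z1nn]) (use s a in auto)
    finally have nY: "norm (Y (Suc (Suc m))) \<le> Tb" .
    have "norm (X (Suc (Suc m))) = norm w1 ^ Suc (Suc m) * (real (Suc (Suc m)) + a) powr (- \<sigma>1) * norm (Y (Suc (Suc m)))"
      unfolding X_def norm_mult norm_divide norm_power norm_cpowr[OF p] ReS1 by (simp add: powr_minus divide_inverse)
    also have "\<dots> \<le> (real m + (2 + a)) powr (- \<sigma>1) * Tb"
    proof (rule mult_mono[OF _ nY])
      have pw: "norm w1 ^ Suc (Suc m) \<le> 1" by (rule power_le_one) (use w1 in auto)
      have eqr: "real (Suc (Suc m)) + a = real m + (2 + a)" by simp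
      show "norm w1 ^ Suc (Suc m) * (real (Suc (Suc m)) + a) powr (- \<sigma>1) \<le> (real m + (2 + a)) powr (- \<sigma>1)"
        unfolding eqr by (rule mult_left_le_one_le[OF _ _ pw]) auto
    qed auto
    finally show ?thesis .
  qed
  have sK: "summable (\<lambda>m::nat. (real m + (2 + a)) powr (- \<sigma>1))" by (rule sum_powr_shift) (use a \<sigma>1 in auto)
  have sK2: "summable (\<lambda>m::nat. (real m + (2 + a)) powr (- \<sigma>1) * Tb)" by (rule summable_mult2[OF sK])
  have Xtn: "summable (\<lambda>m. norm (X (Suc (Suc m))))" by (rule summable_comparison_test'[OF sK2]) (use Xt in auto)
  have Rt: "norm (\<Sum>m. X (Suc (Suc m))) \<le> (\<Sum>m::nat. (real m + (2 + a)) powr (- \<sigma>1)) * Tb"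
  proof -
    have "norm (\<Sum>m. X (Suc (Suc m))) \<le> (\<Sum>m. norm (X (Suc (Suc m))))" by (rule summable_norm[OF Xtn])
    also have "\<dots> \<le> (\<Sum>m. (real m + (2 + a)) powr (- \<sigma>1) * Tb)" by (rule suminf_le[OF Xt Xtn sK2])
    also have "\<dots> = (\<Sum>m::nat. (real m + (2 + a)) powr (- \<sigma>1)) * Tb" by (rule suminf_mult2[OF sK, symmetric])
    finally show ?thesis .
  qed
  have ph: "Phi2 S1 s a w1 w2 = X 0 + X 1 + (\<Sum>m. X (Suc (Suc m)))"
    unfolding Phi2_def S1_def[symmetric] X_def[symmetric, unfolded Y_def] by (rule split2[OF Xs])
  have X0: "X 0 = A * Y 0" by (simp add: X_def A_def)
  have X1: "X 1 = (w1 / complex_of_real (1 + a) powr S1) * Y 1" by (simp add: X_def)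
  have nz: "complex_of_real x powr z \<noteq> 0" if "x > 0" for x z using that by simp
  have diff: "Phi2 (Complex \<sigma>1 0) s a w1 w2
           - (1 / complex_of_real a powr (Complex \<sigma>1 0)) / complex_of_real (1 + a) powr s
           - (w2 / complex_of_real a powr (Complex \<sigma>1 0) + w1 / complex_of_real (1 + a) powr (Complex \<sigma>1 0))
               / complex_of_real (2 + a) powr s
        = A * w2 ^ 2 * T + (w1 / complex_of_real (1 + a) powr S1) * w2 * T + (\<Sum>m. X (Suc (Suc m)))"
    unfolding ph X0 X1 Y0 Y1 S1_def[symmetric] A_def
    by (rule alg2)
  have pa: "a > 0" "1 + a > 0" using a by auto
  have n1: "norm (A * w2 ^ 2 * T) \<le> a powr (- \<sigma>1) * Tb"
  proof -
    have "norm (A * w2 ^ 2 * T) = a powr (- \<sigma>1) * (norm w2 ^ 2 * norm T)"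
      unfolding A_def norm_mult norm_divide norm_power norm_cpowr[OF pa(1)] ReS1 by (simp add: powr_minus divide_inverse)
    also have "\<dots> \<le> a powr (- \<sigma>1) * (1 * Tb)"
      by (intro mult_left_mono mult_mono Tnorm) (use w2 in \<open>auto intro: power_le_one\<close>)
    finally show ?thesis by simp
  qed
  have n2: "norm ((w1 / complex_of_real (1 + a) powr S1) * w2 * T) \<le> (1 + a) powr (- \<sigma>1) * Tb"
  proof -
    have "norm ((w1 / complex_of_real (1 + a) powr S1) * w2 * T) = (1 + a) powr (- \<sigma>1) * (norm w1 * (norm w2 * norm T))"
      unfolding norm_mult norm_divide norm_power norm_cpowr[OF pa(2)] ReS1 by (simp add: powr_minus divide_inverse)
    also have "\<dots> \<le> (1 + a) powr (- \<sigma>1) * (1 * (1 * Tb))"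
      by (intro mult_left_mono mult_mono Tnorm) (use w1 w2 in auto)
    finally show ?thesis by simp
  qed
  have "norm (A * w2 ^ 2 * T + (w1 / complex_of_real (1 + a) powr S1) * w2 * T + (\<Sum>m. X (Suc (Suc m))))
      \<le> a powr (- \<sigma>1) * Tb + (1 + a) powr (- \<sigma>1) * Tb + (\<Sum>m::nat. (real m + (2 + a)) powr (- \<sigma>1)) * Tb"
    by (rule order_trans[OF norm_triangle_ineq add_mono[OF order_trans[OF norm_triangle_ineq add_mono[OF n1 n2]] Rt]])
  also have "\<dots> = KK \<sigma>1 a * (3 + a) powr (- Re s)"
  proof -
    have "(3 + a) powr (2 - Re s) = (3 + a) powr 2 * (3 + a) powr (- Re s)"
      using a by (simp add: powr_add[symmetric] del: powr_numeral)
    then show ?thesis unfolding KK_def Tb_def by (simp add: algebra_simps)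
  qed
  finally show ?thesis unfolding diff .
qed

lemma alg3:
  fixes A R Lzs Lzo Lbs Lbo Qs Qo Pz_s Pz_o Pb_s Pb_o :: complex
  assumes "Pz_s * Pb_o = Pb_s * Pz_o"
    and "Pz_s = (A * (- R) + Lzs) / Qs" "Pb_s = (A * (- R) + Lbs) / Qs"
    and "Pz_o = (A * R + Lzo) / Qo" "Pb_o = (A * R + Lbo) / Qo"
    and "Qs \<noteq> 0" "Qo \<noteq> 0" "R \<noteq> 0"
  shows "A * (Lzs + Lzo - Lbs - Lbo) = (Lbs * Lzo - Lzs * Lbo) * inverse R"
proof -
  from assms(1) have "(A * (- R) + Lzs) * (A * R + Lbo) = (A * (- R) + Lbs) * (A * R + Lzo)"
    unfolding assms(2-5) using assms(6,7) by (simp add: field_simps)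
  then have "R * (A * (Lzs + Lzo - Lbs - Lbo)) = Lbs * Lzo - Lzs * Lbo"
    by (simp add: algebra_simps)
  then show ?thesis using assms(8) by (simp add: field_simps)
qed

lemma cpowr_div:
  assumes "0 < p" "0 < q"
  shows "complex_of_real q powr s / complex_of_real p powr s = complex_of_real (q / p) powr s"
proof -
  have e: "complex_of_real (q / p) powr s = exp (s * of_real (ln q) - s * of_real (ln p))"
    unfolding cpowr_real[of "q / p" s, OF divide_pos_pos[OF assms(2,1)]] using assms by (simp add: ln_div algebra_simps)
  show ?thesis unfolding e cpowr_real[OF assms(1)] cpowr_real[OF assms(2)] by (simp add: exp_diff)
qed

lemma LCONV:
  fixes a \<sigma>1 t :: real and w1 w2 :: complex
  assumes a: "0 < a" and \<sigma>1: "1 < \<sigma>1" and w1: "norm w1 \<le> 1" and w2: "norm w2 \<le> 1"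
  defines "A \<equiv> 1 / complex_of_real a powr (Complex \<sigma>1 0)"
  defines "c \<equiv> w2 / complex_of_real a powr (Complex \<sigma>1 0) + w1 / complex_of_real (1 + a) powr (Complex \<sigma>1 0)"
  shows "(\<lambda>n. complex_of_real (2 + a) powr (Complex (real n + 2) t) * Phi2 (Complex \<sigma>1 0) (Complex (real n + 2) t) a w1 w2
            - A * complex_of_real ((2 + a) / (1 + a)) powr (Complex (real n + 2) t)) \<longlonglongrightarrow> c"
proof -
  define q where "q = 2 + a"
  define r where "r = 3 + a"
  have q: "0 < q" "q < r" "0 < r" using a by (auto simp: q_def r_def)
  define L where "L n = complex_of_real (2 + a) powr (Complex (real n + 2) t) * Phi2 (Complex \<sigma>1 0) (Complex (real n + 2) t) a w1 w2
            - A * complex_of_real ((2 + a) / (1 + a)) powr (Complex (real n + 2) t)" for n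
  have bnd: "norm (L n - c) \<le> KK \<sigma>1 a * (q / r) ^ 2 * (q / r) ^ n" for n
  proof -
    define s where "s = Complex (real n + 2) t"
    have Res: "Re s = real n + 2" by (simp add: s_def)
    have nzq: "complex_of_real (2 + a) powr s \<noteq> 0" using cpowr_real[of "2 + a" s] a by simp
    have "L n - c = complex_of_real (2 + a) powr s * (Phi2 (Complex \<sigma>1 0) s a w1 w2
           - (1 / complex_of_real a powr (Complex \<sigma>1 0)) / complex_of_real (1 + a) powr s
           - (w2 / complex_of_real a powr (Complex \<sigma>1 0) + w1 / complex_of_real (1 + a) powr (Complex \<sigma>1 0))
               / complex_of_real (2 + a) powr s)"
    proof -
      have "complex_of_real (2 + a) powr s * (A / complex_of_real (1 + a) powr s) = A * complex_of_real ((2 + a) / (1 + a)) powr s"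
      proof -
        have n1: "1 + complex_of_real a \<noteq> 0"
        proof
          assume "1 + complex_of_real a = 0" then have "complex_of_real (1 + a) = 0" by simp
          then have "1 + a = 0" using of_real_eq_0_iff by blast
          then show False using a by simp
        qed
        have n2: "2 + complex_of_real a \<noteq> 0"
        proof
          assume "2 + complex_of_real a = 0" then have "complex_of_real (2 + a) = 0" by simp
          then have "2 + a = 0" using of_real_eq_0_iff by blast
          then show False using a by simp
        qed
        show ?thesis using cpowr_div[of "1 + a" "2 + a" s] a n1 n2 by (simp add: field_simps)
      qed
      then show ?thesis unfolding L_def s_def[symmetric] c_def[symmetric] A_def[symmetric] using nzq
        by (simp add: algebra_simps)
    qed
    then have "norm (L n - c) = norm (complex_of_real (2 + a) powr s) * norm (Phi2 (Complex \<sigma>1 0) s a w1 w2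
           - (1 / complex_of_real a powr (Complex \<sigma>1 0)) / complex_of_real (1 + a) powr s
           - (w2 / complex_of_real a powr (Complex \<sigma>1 0) + w1 / complex_of_real (1 + a) powr (Complex \<sigma>1 0))
               / complex_of_real (2 + a) powr s)" by (simp only: norm_mult)
    also have "\<dots> \<le> q powr (real n + 2) * (KK \<sigma>1 a * r powr (- (real n + 2)))"
    proof (rule mult_mono)
      have p2: "0 < 2 + a" using a by simp
      show "norm (complex_of_real (2 + a) powr s) \<le> q powr (real n + 2)"
        unfolding norm_cpowr[OF p2] Res q_def by simp
      show "norm (Phi2 (Complex \<sigma>1 0) s a w1 w2
           - (1 / complex_of_real a powr (Complex \<sigma>1 0)) / complex_of_real (1 + a) powr s
           - (w2 / complex_of_real a powr (Complex \<sigma>1 0) + w1 / complex_of_real (1 + a) powr (Complex \<sigma>1 0))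
               / complex_of_real (2 + a) powr s) \<le> KK \<sigma>1 a * r powr (- (real n + 2))"
        using DEC[OF a \<sigma>1 w1 w2, of s] Res unfolding r_def by simp
    qed auto
    also have "\<dots> = KK \<sigma>1 a * (q / r) powr (real n + 2)"
    proof -
      have "(q / r) powr (real n + 2) = q powr (real n + 2) / r powr (real n + 2)"
        using q by (simp add: powr_divide)
      moreover have "r powr (- (real n + 2)) = inverse (r powr (real n + 2))" by (rule powr_minus)
      ultimately show ?thesis by (simp add: divide_inverse)
    qed
    also have "(q / r) powr (real n + 2) = (q / r) ^ 2 * (q / r) ^ n"
    proof -
      have qr: "0 < q / r" using q by simp
      have "(q / r) powr (real n + 2) = (q / r) powr (real n) * (q / r) powr (real 2)"
        by (simp add: powr_add del: powr_numeral)
      also have "\<dots> = (q / r) ^ n * (q / r) ^ 2" by (simp only: powr_realpow[OF qr])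
      finally show ?thesis by simp
    qed
    finally show ?thesis by (simp add: mult_ac)
  qed
  have "(\<lambda>n. KK \<sigma>1 a * (q / r) ^ 2 * (q / r) ^ n) \<longlonglongrightarrow> KK \<sigma>1 a * (q / r) ^ 2 * 0"
    by (intro tendsto_mult tendsto_const LIMSEQ_power_zero) (use q in auto)
  then have lim0: "(\<lambda>n. KK \<sigma>1 a * (q / r) ^ 2 * (q / r) ^ n) \<longlonglongrightarrow> 0" by simp
  have ev: "eventually (\<lambda>n. norm (L n - c) \<le> KK \<sigma>1 a * (q / r) ^ 2 * (q / r) ^ n) sequentially"
    by (rule always_eventually, rule allI, rule bnd)
  have "(\<lambda>n. L n - c) \<longlonglongrightarrow> 0" by (rule Lim_null_comparison[OF ev lim0])
  then have "L \<longlonglongrightarrow> c" by (simp only: LIM_zero_iff)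
  then show ?thesis unfolding L_def[abs_def] .
qed

lemma cp_rho:
  assumes "0 < \<rho>"
  shows "complex_of_real \<rho> powr (Complex \<sigma> t) = of_real (exp (\<sigma> * ln \<rho>)) * cis (t * ln \<rho>)"
  unfolding cpowr_real[OF assms] by (subst exp_eq_polar) simp

lemma LIMARG:
  fixes a \<sigma>1 :: real and z1 z2 :: complex
  assumes a: "0 < a" and \<sigma>1: "1 < \<sigma>1" and z1: "norm z1 \<le> 1" and z2: "norm z2 \<le> 1"
    and idt: "\<And>\<sigma>2 \<tau>. 2 \<le> \<sigma>2 \<Longrightarrow>
      Phi2 (Complex \<sigma>1 0) (Complex \<sigma>2 \<tau>) a z1 z2 * Phi2 (Complex \<sigma>1 0) (Complex \<sigma>2 0) a (cnj z1) (cnj z2) =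
      Phi2 (Complex \<sigma>1 0) (Complex \<sigma>2 \<tau>) a (cnj z1) (cnj z2) * Phi2 (Complex \<sigma>1 0) (Complex \<sigma>2 0) a z1 z2"
  shows "Im (z2 / complex_of_real a powr (Complex \<sigma>1 0) + z1 / complex_of_real (1 + a) powr (Complex \<sigma>1 0)) = 0"
proof -
  define S1 where "S1 = Complex \<sigma>1 0"
  define A where "A = 1 / complex_of_real a powr S1"
  define c where "c = z2 / complex_of_real a powr S1 + z1 / complex_of_real (1 + a) powr S1"
  define cb where "cb = cnj z2 / complex_of_real a powr S1 + cnj z1 / complex_of_real (1 + a) powr S1"
  have cnjS1: "cnj S1 = S1" by (simp add: S1_def complex_cnj)
  have c0: "cnj (complex_of_real a powr S1) = complex_of_real a powr S1"
    using cnj_cpowr[of a S1] a cnjS1 by simp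
  have c1: "cnj (complex_of_real (1 + a) powr S1) = complex_of_real (1 + a) powr S1"
    using cnj_cpowr[of "1 + a" S1] a cnjS1 by simp
  have cb: "cb = cnj c"
    unfolding cb_def c_def complex_cnj_add complex_cnj_divide c0 c1 ..
  define \<rho> where "\<rho> = (2 + a) / (1 + a)"
  have \<rho>: "1 < \<rho>" using a by (simp add: \<rho>_def)
  define ll where "ll = ln \<rho>"
  have ll: "0 < ll" using \<rho> by (simp add: ll_def)
  define \<tau> where "\<tau> = pi / ll"
  define sn where "sn n = Complex (real n + 2) \<tau>" for n :: nat
  define on where "on n = Complex (real n + 2) 0" for n :: nat
  define L where "L w1 w2 s = complex_of_real (2 + a) powr s * Phi2 S1 s a w1 w2 - A * complex_of_real \<rho> powr s" for w1 w2 s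
  define R where "R n = complex_of_real (exp ((real n + 2) * ll))" for n :: nat
  have LC: "(\<lambda>n. L w1 w2 (Complex (real n + 2) t)) \<longlonglongrightarrow> w2 / complex_of_real a powr S1 + w1 / complex_of_real (1 + a) powr S1"
    if "norm w1 \<le> 1" "norm w2 \<le> 1" for w1 w2 t
    using LCONV[OF a \<sigma>1 that, of t] unfolding L_def A_def S1_def \<rho>_def .
  have nz1: "norm (cnj z1) \<le> 1" "norm (cnj z2) \<le> 1" using z1 z2 by auto
  have l1: "(\<lambda>n. L z1 z2 (sn n)) \<longlonglongrightarrow> c" unfolding sn_def c_def by (rule LC[OF z1 z2])
  have l2: "(\<lambda>n. L z1 z2 (on n)) \<longlonglongrightarrow> c" unfolding on_def c_def by (rule LC[OF z1 z2])
  have l3: "(\<lambda>n. L (cnj z1) (cnj z2) (sn n)) \<longlonglongrightarrow> cb" unfolding sn_def cb_def by (rule LC[OF nz1])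
  have l4: "(\<lambda>n. L (cnj z1) (cnj z2) (on n)) \<longlonglongrightarrow> cb" unfolding on_def cb_def by (rule LC[OF nz1])
  have rho_pos: "0 < \<rho>" using \<rho> by simp
  have cps: "complex_of_real \<rho> powr (sn n) = - R n" for n
    unfolding sn_def R_def cp_rho[OF rho_pos] ll_def[symmetric] \<tau>_def using ll by simp
  have cpo: "complex_of_real \<rho> powr (on n) = R n" for n
    unfolding on_def R_def cp_rho[OF rho_pos] ll_def[symmetric] by simp
  have Qnz: "complex_of_real (2 + a) powr s \<noteq> 0" for s using cpowr_real[of "2 + a" s] a by simp
  have Phi_eq: "Phi2 S1 s a w1 w2 = (A * complex_of_real \<rho> powr s + L w1 w2 s) / complex_of_real (2 + a) powr s" for w1 w2 s
    unfolding L_def using Qnz[of s] by (simp add: field_simps)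
  have Rnz: "R n \<noteq> 0" for n by (simp add: R_def)
  have key: "A * (L z1 z2 (sn n) + L z1 z2 (on n) - L (cnj z1) (cnj z2) (sn n) - L (cnj z1) (cnj z2) (on n)) =
      (L (cnj z1) (cnj z2) (sn n) * L z1 z2 (on n) - L z1 z2 (sn n) * L (cnj z1) (cnj z2) (on n)) * inverse (R n)" for n
  proof (rule alg3)
    show "Phi2 S1 (sn n) a z1 z2 * Phi2 S1 (on n) a (cnj z1) (cnj z2) = Phi2 S1 (sn n) a (cnj z1) (cnj z2) * Phi2 S1 (on n) a z1 z2"
      unfolding sn_def on_def S1_def by (rule idt) simp
  qed (simp_all only: Phi_eq cps cpo Rnz not_False_eq_True, (rule Qnz)+)
  have Rinv: "(\<lambda>n. inverse (R n)) \<longlonglongrightarrow> 0"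
  proof -
    have eq: "inverse (R n) = complex_of_real (exp (- 2 * ll) * exp (- ll) ^ n)" for n
    proof -
      have "exp (- 2 * ll) * exp (- ll) ^ n = exp (- ((real n + 2) * ll))"
        by (simp add: exp_of_nat_mult[symmetric] exp_add[symmetric] algebra_simps)
      then show ?thesis by (simp add: R_def exp_minus)
    qed
    have "(\<lambda>n. complex_of_real (exp (- 2 * ll) * exp (- ll) ^ n)) \<longlonglongrightarrow> complex_of_real (exp (- 2 * ll) * 0)"
      by (intro tendsto_of_real tendsto_mult tendsto_const LIMSEQ_power_zero) (use ll in simp)
    then show ?thesis unfolding eq by simp
  qed
  have lim1: "(\<lambda>n. A * (L z1 z2 (sn n) + L z1 z2 (on n) - L (cnj z1) (cnj z2) (sn n) - L (cnj z1) (cnj z2) (on n)))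
      \<longlonglongrightarrow> A * (c + c - cb - cb)"
    by (intro tendsto_intros l1 l2 l3 l4)
  have lim2: "(\<lambda>n. (L (cnj z1) (cnj z2) (sn n) * L z1 z2 (on n) - L z1 z2 (sn n) * L (cnj z1) (cnj z2) (on n)) * inverse (R n))
      \<longlonglongrightarrow> (cb * c - c * cb) * 0"
    by (intro tendsto_intros l1 l2 l3 l4 Rinv)
  have "A * (c + c - cb - cb) = (cb * c - c * cb) * 0"
    using LIMSEQ_unique[OF lim1 lim2[folded key]] .
  moreover have "A \<noteq> 0" unfolding A_def using cpowr_real[of a S1] a by simp
  ultimately have "c = cb" by (simp add: algebra_simps)
  then have "c = cnj c" using cb by simp
  then have "Im c = 0" using complex_cnj_cancel_iff by (metis Reals_cnj_iff complex_is_Real_iff)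
  then show ?thesis unfolding c_def S1_def .
qed

lemma cp_real:
  assumes x: "0 < x"
  shows "complex_of_real x powr (Complex \<sigma> 0) = complex_of_real (x powr \<sigma>)"
proof -
  have "Complex \<sigma> 0 = complex_of_real \<sigma>" by (simp add: complex_of_real_def)
  then have "complex_of_real x powr (Complex \<sigma> 0) = exp (complex_of_real (\<sigma> * ln x))"
    unfolding cpowr_real[OF x] by simp
  also have "\<dots> = complex_of_real (exp (\<sigma> * ln x))" by (rule exp_of_real)
  also have "\<dots> = complex_of_real (x powr \<sigma>)" using x by (simp add: powr_def)
  finally show ?thesis .
qed

lemma Im_c:
  assumes a: "0 < a"
  shows "Im (z2 / complex_of_real a powr (Complex \<sigma> 0) + z1 / complex_of_real (1 + a) powr (Complex \<sigma> 0))
       = Im z2 / a powr \<sigma> + Im z1 / (1 + a) powr \<sigma>"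
proof -
  have p: "0 < 1 + a" using a by simp
  show ?thesis unfolding cp_real[OF a] cp_real[OF p] by (simp add: Im_divide_of_real)
qed

lemma lin_solve:
  fixes y1 y2 u v :: real
  assumes u: "0 < u" and v: "0 < v" and uv: "u \<noteq> v"
    and e2: "y2 / u ^ 2 + y1 / v ^ 2 = 0" and e3: "y2 / u ^ 3 + y1 / v ^ 3 = 0"
  shows "y1 = 0 \<and> y2 = 0"
proof -
  from e2 have f2: "y2 * v ^ 2 + y1 * u ^ 2 = 0" using u v by (simp add: field_simps)
  from e3 have f3: "y2 * v ^ 3 + y1 * u ^ 3 = 0" using u v by (simp add: field_simps)
  have "y2 * v ^ 2 = - (y1 * u ^ 2)" using f2 by linarith
  then have "y2 * v ^ 2 * v = - (y1 * u ^ 2) * v" by simp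
  then have "y2 * v ^ 3 = - (y1 * u ^ 2) * v" by (simp add: power3_eq_cube power2_eq_square mult_ac)
  with f3 have "y1 * u ^ 2 * (u - v) = 0" by (simp add: algebra_simps power3_eq_cube power2_eq_square)
  then have y1: "y1 = 0" using u uv by simp
  then have "y2 = 0" using f2 v by simp
  with y1 show ?thesis by simp
qed

theorem theorem2p4:
  fixes a :: real and z1 z2 :: complex
  assumes "0 < a" and "a \<le> 1"
    and "0 < cmod z1" and "cmod z1 \<le> 1" and "0 < cmod z2" and "cmod z2 \<le> 1"
  shows "((\<forall>\<sigma>1 \<sigma>2. 0 < \<sigma>1 \<and> 1 < \<sigma>2 \<and> 2 < \<sigma>1 + \<sigma>2 \<longrightarrow>
             is_char_fun2 (F_fun \<sigma>1 \<sigma>2 a z1 z2))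
          \<longleftrightarrow> (z1 \<in> \<real> \<and> z2 \<in> \<real>))
       \<and> (z1 \<in> \<real> \<and> z2 \<in> \<real> \<longrightarrow>
          (\<forall>\<sigma>1 \<sigma>2. 0 < \<sigma>1 \<and> 1 < \<sigma>2 \<and> 2 < \<sigma>1 + \<sigma>2 \<longrightarrow>
             (\<forall>x. P_dens \<sigma>1 \<sigma>2 a z1 z2 x \<in> \<real> \<and> 0 \<le> Re (P_dens \<sigma>1 \<sigma>2 a z1 z2 x)) \<and>
             prob_space (density lborel (\<lambda>x. ennreal (Re (P_dens \<sigma>1 \<sigma>2 a z1 z2 x)))) \<and>
             (\<forall>t1 t2. F_fun \<sigma>1 \<sigma>2 a z1 z2 t1 t2 =
                char2 (density lborel (\<lambda>x. ennreal (Re (P_dens \<sigma>1 \<sigma>2 a z1 z2 x)))) t1 t2)))"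
proof -
  note a = assms(1) and z1 = assms(4) and z2 = assms(6)
  have B: "z1 \<in> \<real> \<and> z2 \<in> \<real> \<longrightarrow>
          (\<forall>\<sigma>1 \<sigma>2. 0 < \<sigma>1 \<and> 1 < \<sigma>2 \<and> 2 < \<sigma>1 + \<sigma>2 \<longrightarrow>
             (\<forall>x. P_dens \<sigma>1 \<sigma>2 a z1 z2 x \<in> \<real> \<and> 0 \<le> Re (P_dens \<sigma>1 \<sigma>2 a z1 z2 x)) \<and>
             prob_space (density lborel (\<lambda>x. ennreal (Re (P_dens \<sigma>1 \<sigma>2 a z1 z2 x)))) \<and>
             (\<forall>t1 t2. F_fun \<sigma>1 \<sigma>2 a z1 z2 t1 t2 =
                char2 (density lborel (\<lambda>x. ennreal (Re (P_dens \<sigma>1 \<sigma>2 a z1 z2 x)))) t1 t2))"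
    using PartA[OF a z1 z2] by blast
  have if1: "(z1 \<in> \<real> \<and> z2 \<in> \<real>) \<Longrightarrow> (\<forall>\<sigma>1 \<sigma>2. 0 < \<sigma>1 \<and> 1 < \<sigma>2 \<and> 2 < \<sigma>1 + \<sigma>2 \<longrightarrow>
             is_char_fun2 (F_fun \<sigma>1 \<sigma>2 a z1 z2))"
  proof (intro allI impI)
    fix \<sigma>1 \<sigma>2 :: real assume zr: "z1 \<in> \<real> \<and> z2 \<in> \<real>" and s: "0 < \<sigma>1 \<and> 1 < \<sigma>2 \<and> 2 < \<sigma>1 + \<sigma>2"
    from B zr s show "is_char_fun2 (F_fun \<sigma>1 \<sigma>2 a z1 z2)"
      unfolding is_char_fun2_def by (intro exI[of _ "density lborel (\<lambda>x. ennreal (Re (P_dens \<sigma>1 \<sigma>2 a z1 z2 x)))"]) auto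
  qed
  have if2: "z1 \<in> \<real> \<and> z2 \<in> \<real>" if ch: "\<forall>\<sigma>1 \<sigma>2. 0 < \<sigma>1 \<and> 1 < \<sigma>2 \<and> 2 < \<sigma>1 + \<sigma>2 \<longrightarrow>
             is_char_fun2 (F_fun \<sigma>1 \<sigma>2 a z1 z2)"
  proof -
    have Ic: "Im z2 / a powr \<sigma>1 + Im z1 / (1 + a) powr \<sigma>1 = 0" if s1: "1 < \<sigma>1" for \<sigma>1
    proof -
      have "Im (z2 / complex_of_real a powr (Complex \<sigma>1 0) + z1 / complex_of_real (1 + a) powr (Complex \<sigma>1 0)) = 0"
      proof (rule LIMARG[OF a s1 z1 z2])
        fix \<sigma>2 \<tau> :: real assume "2 \<le> \<sigma>2"
        then have s: "0 < \<sigma>1" "1 < \<sigma>2" "2 < \<sigma>1 + \<sigma>2" using s1 by auto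
        show "Phi2 (Complex \<sigma>1 0) (Complex \<sigma>2 \<tau>) a z1 z2 * Phi2 (Complex \<sigma>1 0) (Complex \<sigma>2 0) a (cnj z1) (cnj z2) =
          Phi2 (Complex \<sigma>1 0) (Complex \<sigma>2 \<tau>) a (cnj z1) (cnj z2) * Phi2 (Complex \<sigma>1 0) (Complex \<sigma>2 0) a z1 z2"
          by (rule ident(2)[OF a z1 z2 s]) (use ch s in blast)
      qed
      then show ?thesis unfolding Im_c[OF a] .
    qed
    have "Im z1 = 0 \<and> Im z2 = 0"
    proof (rule lin_solve[of a "1 + a"])
      show "Im z2 / a ^ 2 + Im z1 / (1 + a) ^ 2 = 0" using Ic[of 2] a by (simp add: powr_numeral)
      show "Im z2 / a ^ 3 + Im z1 / (1 + a) ^ 3 = 0" using Ic[of 3] a by (simp add: powr_numeral)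
    qed (use a in auto)
    then show ?thesis by (simp add: complex_is_Real_iff)
  qed
  show ?thesis using B if1 if2 by blast
qed

end
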